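(* Every $2$-uniform projective Hjelmslev plane is isomorphic to an incidence structure produced by the Construction (Algorithm 1) described in the context, for a suitable integer $m\ge 2$, projective plane $\mathcal{P}$ of order $m$, affine planes $\mathcal{A}_P$, orthogonal arrays $\mathcal{O}_l$, and admissible choices $\pi,\beta$.
   Context: An orthogonal array $OA(2,k,v)$ is a $v^2\times k$ array with entries from a $v$-element symbol set such that in any two columns every ordered pair of symbols occurs in exactly one row. A projective plane of order $m$ has $m+1$ points on each line and $m+1$ lines through each point; an affine plane of order $m$ has $m^2$ points, $m$ points per line, and its lines split into $m+1$ parallel classes, each consisting of $m$ pairwise disjoint lines covering all points. Construction (Algorithm 1). Let $\mathcal{P}$ be a projective plane of order $m$. For each point $P$ of $\mathcal{P}$ let $\mathcal{A}_P$ be an affine plane of order $m$ (not necessarily all the same). For each line $l$ of $\mathcal{P}$ let $\mathcal{O}_l$ be an $OA(2,m+1,m)$ on a symbol set $\Sigma_l$ whose $m+1$ columns are labelled bijectively by the $m+1$ points of $l$. For each incident pair $P\in l$ choose a parallel class $\pi(P,l)$ of $\mathcal{A}_P$ such that, for each fixed $P$, the map $l\mapsto\pi(P,l)$ is a bijection from the $m+1$ lines of $\mathcal{P}$ through $P$ to the $m+1$ parallel classes of $\mathcal{A}_P$; and choose a bijection $\beta_{P,l}$ from $\Sigma_l$ to the $m$ lines of $\pi(P,l)$. The points of the constructed structure are the pairs $(P,x)$ with $P$ a point of $\mathcal{P}$ and $x$ a point of $\mathcal{A}_P$. For each line $l$ of $\mathcal{P}$ and each row $r$ of $\mathcal{O}_l$,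 there is the line $\bigcup_{P\in l}\{(P,x): x\in \beta_{P,l}(\mathcal{O}_l(r,P))\}$, where $\mathcal{O}_l(r,P)$ is the entry in row $r$ and the column labelled $P$. Incidence is membership. Projective Hjelmslev plane: an incidence structure $\mathcal{H}$ such that (1) any two points are incident with at least one line; (2) any two lines meet in at least one point; (3) two lines meeting in more than one point are called neighbours; (4) two points incident with more than one common line are called neighbours; (5) there is an incidence-preserving surjection $\phi$ from $\mathcal{H}$ onto an ordinary projective plane with $\phi(P)=\phi(Q)\iff P\sim Q$ for points and $\phi(g)=\phi(h)\iff g\sim h$ for lines (where $\sim$ is the neighbour relation, reflexively extended). Affine Hjelmslev plane: an incidence structure such that any two points are incident with at least one line, lines meeting in more than one point are neighbours, and there is an incidence-preserving surjection $\phi$ onto an ordinary affine plane with $\phi(P)=\phi(Q)\iff P\sim Q$, $\phi(g)=\phi(h)\iff g\sim h$, and lines with no common point mapped to parallel lines. Uniformity: a $1$-uniform projective (resp. affine) Hjelmslev plane is an ordinary projective (resp. affine) plane. For a point $P$, the point-neighbourhood restriction $\bar P$ is the incidence structure whose points are the points $Q\sim P$ and whose lines are the nonempty sets $g\cap\bar P$ for lines $g$ of $\mathcal{H}$. A projective (resp. affine) Hjelmslev plane is $n$-uniform if for every point $P$, $\bar P$ is an $(n-1)$-uniform affine Hjelmslev plane, and every line of $\bar P$ is the restriction of the same number of lines of $\mathcal{H}$. *)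

theory Defs
  imports Main
begin

text \<open>An incidence structure is given by a point set, a line set and an incidence
relation.  Lines are abstract (possibly repeated point sets).\<close>

definition points_on :: "'p set \<Rightarrow> ('p \<Rightarrow> 'l \<Rightarrow> bool) \<Rightarrow> 'l \<Rightarrow> 'p set" where
  "points_on Pts I l = {P \<in> Pts. I P l}"

definition lines_through :: "'l set \<Rightarrow> ('p \<Rightarrow> 'l \<Rightarrow> bool) \<Rightarrow> 'p \<Rightarrow> 'l set" where
  "lines_through Lns I P = {l \<in> Lns. I P l}"

definition collinear :: "'l set \<Rightarrow> ('p \<Rightarrow> 'l \<Rightarrow> bool) \<Rightarrow> 'p set \<Rightarrow> bool" where
  "collinear Lns I S \<longleftrightarrow> (\<exists>l\<in>Lns. \<forall>P\<in>S. I P l)"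

definition pnb :: "'p set \<Rightarrow> 'l set \<Rightarrow> ('p \<Rightarrow> 'l \<Rightarrow> bool) \<Rightarrow> 'p \<Rightarrow> 'p \<Rightarrow> bool" where
  "pnb Pts Lns I P Q \<longleftrightarrow> P = Q \<or>
     (\<exists>g\<in>Lns. \<exists>h\<in>Lns. g \<noteq> h \<and> I P g \<and> I Q g \<and> I P h \<and> I Q h)"

definition lnb :: "'p set \<Rightarrow> 'l set \<Rightarrow> ('p \<Rightarrow> 'l \<Rightarrow> bool) \<Rightarrow> 'l \<Rightarrow> 'l \<Rightarrow> bool" where
  "lnb Pts Lns I g h \<longleftrightarrow> g = h \<or>
     (\<exists>P\<in>Pts. \<exists>Q\<in>Pts. P \<noteq> Q \<and> I P g \<and> I P h \<and> I Q g \<and> I Q h)"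

definition projective_plane :: "'p set \<Rightarrow> 'l set \<Rightarrow> ('p \<Rightarrow> 'l \<Rightarrow> bool) \<Rightarrow> bool" where
  "projective_plane Pts Lns I \<longleftrightarrow>
     (\<forall>P\<in>Pts. \<forall>Q\<in>Pts. P \<noteq> Q \<longrightarrow> (\<exists>!l. l \<in> Lns \<and> I P l \<and> I Q l)) \<and>
     (\<forall>g\<in>Lns. \<forall>h\<in>Lns. g \<noteq> h \<longrightarrow> (\<exists>!P. P \<in> Pts \<and> I P g \<and> I P h)) \<and>
     (\<exists>S\<subseteq>Pts. card S = 4 \<and> (\<forall>T\<subseteq>S. card T = 3 \<longrightarrow> \<not> collinear Lns I T))"

definition projective_plane_of_order ::
    "nat \<Rightarrow> 'p set \<Rightarrow> 'l set \<Rightarrow> ('p \<Rightarrow> 'l \<Rightarrow> bool) \<Rightarrow> bool" where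
  "projective_plane_of_order m Pts Lns I \<longleftrightarrow> projective_plane Pts Lns I \<and>
     (\<forall>l\<in>Lns. card (points_on Pts I l) = m + 1) \<and>
     (\<forall>P\<in>Pts. card (lines_through Lns I P) = m + 1)"

definition parallel :: "'p set \<Rightarrow> ('p \<Rightarrow> 'l \<Rightarrow> bool) \<Rightarrow> 'l \<Rightarrow> 'l \<Rightarrow> bool" where
  "parallel Pts I g h \<longleftrightarrow> g = h \<or> \<not> (\<exists>P\<in>Pts. I P g \<and> I P h)"

definition affine_plane :: "'p set \<Rightarrow> 'l set \<Rightarrow> ('p \<Rightarrow> 'l \<Rightarrow> bool) \<Rightarrow> bool" where
  "affine_plane Pts Lns I \<longleftrightarrow>
     (\<forall>P\<in>Pts. \<forall>Q\<in>Pts. P \<noteq> Q \<longrightarrow> (\<exists>!l. l \<in> Lns \<and> I P l \<and> I Q l)) \<and>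
     (\<forall>l\<in>Lns. \<forall>P\<in>Pts. \<not> I P l \<longrightarrow>
        (\<exists>!h. h \<in> Lns \<and> I P h \<and> \<not> (\<exists>Q\<in>Pts. I Q h \<and> I Q l))) \<and>
     (\<forall>l\<in>Lns. \<exists>P\<in>Pts. \<exists>Q\<in>Pts. P \<noteq> Q \<and> I P l \<and> I Q l) \<and>
     (\<exists>S\<subseteq>Pts. card S = 3 \<and> \<not> collinear Lns I S)"

definition affine_plane_of_order ::
    "nat \<Rightarrow> 'p set \<Rightarrow> 'l set \<Rightarrow> ('p \<Rightarrow> 'l \<Rightarrow> bool) \<Rightarrow> bool" where
  "affine_plane_of_order m Pts Lns I \<longleftrightarrow> affine_plane Pts Lns I \<and>
     finite Pts \<and> card Pts = m ^ 2 \<and>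
     (\<forall>l\<in>Lns. card (points_on Pts I l) = m)"

definition parallel_classes :: "'p set \<Rightarrow> 'l set \<Rightarrow> ('p \<Rightarrow> 'l \<Rightarrow> bool) \<Rightarrow> 'l set set" where
  "parallel_classes Pts Lns I = {{h \<in> Lns. parallel Pts I g h} | g. g \<in> Lns}"

text \<open>The target projective plane of the epimorphism is taken on the same carrier
types; this is no restriction since its point/line sets are images of Pts/Lns.\<close>

definition proj_hjelmslev_plane :: "'p set \<Rightarrow> 'l set \<Rightarrow> ('p \<Rightarrow> 'l \<Rightarrow> bool) \<Rightarrow> bool" where
  "proj_hjelmslev_plane Pts Lns I \<longleftrightarrow>
     (\<forall>P\<in>Pts. \<forall>Q\<in>Pts. \<exists>g\<in>Lns. I P g \<and> I Q g) \<and>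
     (\<forall>g\<in>Lns. \<forall>h\<in>Lns. \<exists>P\<in>Pts. I P g \<and> I P h) \<and>
     (\<exists>(Pts' :: 'p set) (Lns' :: 'l set) I' (\<phi> :: 'p \<Rightarrow> 'p) (\<psi> :: 'l \<Rightarrow> 'l).
        projective_plane Pts' Lns' I' \<and>
        \<phi> ` Pts = Pts' \<and> \<psi> ` Lns = Lns' \<and>
        (\<forall>P\<in>Pts. \<forall>g\<in>Lns. I P g \<longrightarrow> I' (\<phi> P) (\<psi> g)) \<and>
        (\<forall>P\<in>Pts. \<forall>Q\<in>Pts. \<phi> P = \<phi> Q \<longleftrightarrow> pnb Pts Lns I P Q) \<and>
        (\<forall>g\<in>Lns. \<forall>h\<in>Lns. \<psi> g = \<psi> h \<longleftrightarrow> lnb Pts Lns I g h))"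

definition nbhd_points :: "'p set \<Rightarrow> 'l set \<Rightarrow> ('p \<Rightarrow> 'l \<Rightarrow> bool) \<Rightarrow> 'p \<Rightarrow> 'p set" where
  "nbhd_points Pts Lns I P = {Q \<in> Pts. pnb Pts Lns I Q P}"

definition restr_line :: "'p set \<Rightarrow> 'l set \<Rightarrow> ('p \<Rightarrow> 'l \<Rightarrow> bool) \<Rightarrow> 'p \<Rightarrow> 'l \<Rightarrow> 'p set" where
  "restr_line Pts Lns I P g = {Q \<in> nbhd_points Pts Lns I P. I Q g}"

definition nbhd_lines :: "'p set \<Rightarrow> 'l set \<Rightarrow> ('p \<Rightarrow> 'l \<Rightarrow> bool) \<Rightarrow> 'p \<Rightarrow> 'p set set" where
  "nbhd_lines Pts Lns I P =
     {restr_line Pts Lns I P g | g. g \<in> Lns \<and> restr_line Pts Lns I P g \<noteq> {}}"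

text \<open>A 1-uniform affine Hjelmslev plane is an ordinary affine plane.\<close>

definition uniform1_affine_hjelmslev :: "'p set \<Rightarrow> 'p set set \<Rightarrow> bool" where
  "uniform1_affine_hjelmslev Pts Lns \<longleftrightarrow> affine_plane Pts Lns (\<lambda>x L. x \<in> L)"

definition uniform2_proj_hjelmslev :: "'p set \<Rightarrow> 'l set \<Rightarrow> ('p \<Rightarrow> 'l \<Rightarrow> bool) \<Rightarrow> bool" where
  "uniform2_proj_hjelmslev Pts Lns I \<longleftrightarrow> proj_hjelmslev_plane Pts Lns I \<and>
     (\<forall>P\<in>Pts. uniform1_affine_hjelmslev (nbhd_points Pts Lns I P) (nbhd_lines Pts Lns I P) \<and>
        (\<exists>c. \<forall>L\<in>nbhd_lines Pts Lns I P.
               card {g \<in> Lns. restr_line Pts Lns I P g = L} = c))"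

definition orthogonal_array ::
    "nat \<Rightarrow> nat \<Rightarrow> 'r set \<Rightarrow> 'c set \<Rightarrow> 's set \<Rightarrow> ('r \<Rightarrow> 'c \<Rightarrow> 's) \<Rightarrow> bool" where
  "orthogonal_array k v R C S A \<longleftrightarrow>
     finite R \<and> card R = v ^ 2 \<and> finite C \<and> card C = k \<and> finite S \<and> card S = v \<and>
     (\<forall>r\<in>R. \<forall>c\<in>C. A r c \<in> S) \<and>
     (\<forall>c1\<in>C. \<forall>c2\<in>C. c1 \<noteq> c2 \<longrightarrow>
        (\<forall>s1\<in>S. \<forall>s2\<in>S. \<exists>!r. r \<in> R \<and> A r c1 = s1 \<and> A r c2 = s2))"

text \<open>Data: projective plane (PP,PL,PI) of order m; affine planes (AP P, AL P) with
lines as point sets; OA on symbol set Sig l with rows Rows l and entries OA l r P;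
parallel-class choice pi and bijections beta.\<close>

definition alg1_data ::
    "nat \<Rightarrow> 'a set \<Rightarrow> 'b set \<Rightarrow> ('a \<Rightarrow> 'b \<Rightarrow> bool) \<Rightarrow> ('a \<Rightarrow> 'c set) \<Rightarrow> ('a \<Rightarrow> 'c set set)
     \<Rightarrow> ('b \<Rightarrow> 's set) \<Rightarrow> ('b \<Rightarrow> 'r set) \<Rightarrow> ('b \<Rightarrow> 'r \<Rightarrow> 'a \<Rightarrow> 's)
     \<Rightarrow> ('a \<Rightarrow> 'b \<Rightarrow> 'c set set) \<Rightarrow> ('a \<Rightarrow> 'b \<Rightarrow> 's \<Rightarrow> 'c set) \<Rightarrow> bool" where
  "alg1_data m PP PL PI AP AL Sig Rows OA pi beta \<longleftrightarrow>
     projective_plane_of_order m PP PL PI \<and>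
     (\<forall>P\<in>PP. affine_plane_of_order m (AP P) (AL P) (\<lambda>x L. x \<in> L) \<and> AL P \<subseteq> Pow (AP P)) \<and>
     (\<forall>l\<in>PL. orthogonal_array (m + 1) m (Rows l) (points_on PP PI l) (Sig l) (OA l)) \<and>
     (\<forall>P\<in>PP. bij_betw (pi P) (lines_through PL PI P)
                (parallel_classes (AP P) (AL P) (\<lambda>x L. x \<in> L))) \<and>
     (\<forall>P\<in>PP. \<forall>l\<in>PL. PI P l \<longrightarrow> bij_betw (beta P l) (Sig l) (pi P l))"

definition alg1_points :: "'a set \<Rightarrow> ('a \<Rightarrow> 'c set) \<Rightarrow> ('a \<times> 'c) set" where
  "alg1_points PP AP = Sigma PP AP"

definition alg1_lines ::
    "'a set \<Rightarrow> 'b set \<Rightarrow> ('a \<Rightarrow> 'b \<Rightarrow> bool) \<Rightarrow> ('b \<Rightarrow> 'r set) \<Rightarrow> ('b \<Rightarrow> 'r \<Rightarrow> 'a \<Rightarrow> 's)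
     \<Rightarrow> ('a \<Rightarrow> 'b \<Rightarrow> 's \<Rightarrow> 'c set) \<Rightarrow> ('a \<times> 'c) set set" where
  "alg1_lines PP PL PI Rows OA beta =
     {(\<Union>P\<in>points_on PP PI l. {P} \<times> beta P l (OA l r P)) | l r. l \<in> PL \<and> r \<in> Rows l}"

definition isomorphic ::
    "'p set \<Rightarrow> 'l set \<Rightarrow> ('p \<Rightarrow> 'l \<Rightarrow> bool) \<Rightarrow> 'q set \<Rightarrow> 'k set \<Rightarrow> ('q \<Rightarrow> 'k \<Rightarrow> bool) \<Rightarrow> bool" where
  "isomorphic Pts Lns I Pts' Lns' I' \<longleftrightarrow>
     (\<exists>f g. bij_betw f Pts Pts' \<and> bij_betw g Lns Lns' \<and>
        (\<forall>P\<in>Pts. \<forall>l\<in>Lns. I P l \<longleftrightarrow> I' (f P) (g l)))"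

end

theory Submission
  imports Defs
begin


locale affp =
  fixes C :: "'a set" and L :: "'a set set"
  assumes ap: "affine_plane C L (\<lambda>x l. x \<in> l)"
    and sub: "L \<subseteq> Pow C" and fin: "finite C"
begin

lemma ex1_eq: "\<exists>!x. P x \<Longrightarrow> P a \<Longrightarrow> P b \<Longrightarrow> a = b" by blast

lemma finL: "finite L"
  using sub fin by (meson finite_Pow_iff finite_subset)

lemma lsub: "l \<in> L \<Longrightarrow> l \<subseteq> C" using sub by auto

lemma finl: "l \<in> L \<Longrightarrow> finite l" using lsub fin finite_subset by blast

lemmas ax = ap[unfolded affine_plane_def]
lemmas ax1 = ax[THEN conjunct1]
lemmas ax2 = ax[THEN conjunct2, THEN conjunct1]
lemmas ax3 = ax[THEN conjunct2, THEN conjunct2, THEN conjunct1]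
lemmas ax4 = ax[THEN conjunct2, THEN conjunct2, THEN conjunct2]

lemma a1: "P \<in> C \<Longrightarrow> Q \<in> C \<Longrightarrow> P \<noteq> Q \<Longrightarrow> \<exists>l. l \<in> L \<and> P \<in> l \<and> Q \<in> l"
  using ax1 by blast

lemma uniq: assumes h: "l \<in> L" "l' \<in> L" "P \<in> l" "Q \<in> l" "P \<in> l'" "Q \<in> l'" "P \<noteq> Q"
  shows "l = l'"
proof -
  have PQ: "P \<in> C" "Q \<in> C" using lsub h by auto
  have e: "\<exists>!l. l \<in> L \<and> P \<in> l \<and> Q \<in> l" using ax1[rule_format, OF PQ h(7)] .
  show ?thesis by (rule ex1_eq[OF e]) (use h in auto)
qed

lemma a2': assumes h: "l \<in> L" "P \<in> C" "P \<notin> l"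
  shows "\<exists>!h. h \<in> L \<and> P \<in> h \<and> \<not> (\<exists>Q\<in>C. Q \<in> h \<and> Q \<in> l)"
  using ax2[rule_format, OF h] .

lemma a2: assumes h: "l \<in> L" "P \<in> C" "P \<notin> l" shows "\<exists>h. h \<in> L \<and> P \<in> h \<and> h \<inter> l = {}"
proof -
  obtain h where "h \<in> L" "P \<in> h" "\<not> (\<exists>Q\<in>C. Q \<in> h \<and> Q \<in> l)" using ex1_implies_ex[OF a2'[OF h]] by blast
  then show ?thesis using lsub by blast
qed

lemma a2u: assumes h: "l \<in> L" "P \<in> C" "P \<notin> l" "h \<in> L" "h' \<in> L" "P \<in> h" "P \<in> h'"
   "h \<inter> l = {}" "h' \<inter> l = {}" shows "h = h'"
  by (rule ex1_eq[OF a2'[OF h(1-3)]]) (use h in auto)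

lemma a3: "l \<in> L \<Longrightarrow> \<exists>P Q. P \<noteq> Q \<and> P \<in> l \<and> Q \<in> l"
  using ax3 by blast

lemma a4: "\<exists>A B D. A \<in> C \<and> B \<in> C \<and> D \<in> C \<and> A \<noteq> B \<and> B \<noteq> D \<and> A \<noteq> D \<and>
   \<not> (\<exists>l\<in>L. A \<in> l \<and> B \<in> l \<and> D \<in> l)"
proof -
  obtain S where S: "S \<subseteq> C" "card S = 3" "\<not> collinear L (\<lambda>x l. x \<in> l) S"
    using ax4 by blast
  then obtain A B D where "S = {A,B,D}" "A \<noteq> B" "B \<noteq> D" "A \<noteq> D" using card_3_iff by metis
  then show ?thesis using S unfolding collinear_def by auto
qed

definition par :: "'a set \<Rightarrow> 'a set \<Rightarrow> bool" where
  "par g h \<longleftrightarrow> g = h \<or> g \<inter> h = {}"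

definition cls :: "'a set \<Rightarrow> 'a set set" where
  "cls g = {h \<in> L. par g h}"

lemma pc_eq: "parallel_classes C L (\<lambda>x l. x \<in> l) = cls ` L"
proof -
  have "\<And>g h. g \<in> L \<Longrightarrow> h \<in> L \<Longrightarrow> parallel C (\<lambda>x l. x \<in> l) g h = par g h"
    unfolding parallel_def par_def using lsub by blast
  then show ?thesis unfolding parallel_classes_def cls_def by blast
qed

lemma par_sym: "par g h \<Longrightarrow> par h g" unfolding par_def by blast

lemma par_trans: assumes "g \<in> L" "h \<in> L" "k \<in> L" "par g h" "par h k" shows "par g k"
proof (rule ccontr)
  assume n: "\<not> par g k"
  then obtain P where P: "P \<in> g" "P \<in> k" "g \<noteq> k" unfolding par_def by blast
  show False
  proof (cases "P \<in> h")
    case True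
    then have "g = h" "h = k" using assms P unfolding par_def by blast+
    then show False using P by simp
  next
    case False
    then have "g \<inter> h = {}" "k \<inter> h = {}" using assms P unfolding par_def by blast+
    moreover have "P \<in> C" using P assms lsub by blast
    ultimately have "g = k" using a2u[of h P g k] assms P False by blast
    then show False using P by simp
  qed
qed

lemma cls_eq: assumes "g \<in> L" "h \<in> L" shows "cls g = cls h \<longleftrightarrow> par g h"
proof
  assume "cls g = cls h"
  then have "h \<in> cls g" using assms unfolding cls_def par_def by blast
  then show "par g h" unfolding cls_def by blast
next
  assume "par g h"
  then show "cls g = cls h" unfolding cls_def using assms par_trans par_sym by blast
qed

lemma mem_cls: assumes "h \<in> cls g" "g \<in> L" shows "cls h = cls g"
proof -
  have "h \<in> L" "par g h" using assms unfolding cls_def by auto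
  then show ?thesis using cls_eq[of h g] par_sym assms by simp
qed

lemma self_cls: "g \<in> L \<Longrightarrow> g \<in> cls g" unfolding cls_def par_def by blast

lemma cls_through: assumes "g \<in> L" "P \<in> C" shows "\<exists>l. l \<in> cls g \<and> P \<in> l"
proof (cases "P \<in> g")
  case True then show ?thesis using self_cls assms by blast
next
  case False
  then obtain h where "h \<in> L" "P \<in> h" "h \<inter> g = {}" using a2 assms by blast
  then show ?thesis unfolding cls_def par_def by blast
qed

lemma cls_through_uniq: assumes "g \<in> L" "l \<in> cls g" "l' \<in> cls g" "P \<in> l" "P \<in> l'" shows "l = l'"
proof -
  have "l \<in> L" "l' \<in> L" "par g l" "par g l'" using assms unfolding cls_def by auto
  then have "par l l'" using par_trans par_sym assms by blast
  then show ?thesis using assms unfolding par_def by blast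
qed

lemma card_line_cls: assumes "g \<in> L" "h \<in> L" "\<not> par g h" shows "card g = card (cls h)"
proof -
  define f where "f P = (THE l. l \<in> cls h \<and> P \<in> l)" for P
  have fP: "f P \<in> cls h \<and> P \<in> f P" if "P \<in> g" for P
  proof -
    have "P \<in> C" using that assms lsub by blast
    then obtain l where "l \<in> cls h" "P \<in> l" using cls_through assms by blast
    then have "\<exists>!l. l \<in> cls h \<and> P \<in> l" using cls_through_uniq[OF assms(2)] by blast
    then show ?thesis unfolding f_def by (rule theI')
  qed
  have "bij_betw f g (cls h)"
    unfolding bij_betw_def
  proof (intro conjI)
    show "inj_on f g"
    proof (rule inj_onI)
      fix P Q assume h: "P \<in> g" "Q \<in> g" "f P = f Q"
      have "f P \<noteq> g"
      proof
        assume e: "f P = g"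
        have "g \<in> cls h" using fP[OF h(1)] e by simp
        then show False using assms unfolding cls_def using par_sym by blast
      qed
      moreover have "f P \<in> L" using fP h unfolding cls_def by blast
      ultimately show "P = Q" using uniq[of g "f P" P Q] fP h assms by auto
    qed
    show "f ` g = cls h"
    proof
      show "f ` g \<subseteq> cls h" using fP by blast
      show "cls h \<subseteq> f ` g"
      proof
        fix l assume l: "l \<in> cls h"
        then have lL: "l \<in> L" "par h l" unfolding cls_def by auto
        have "\<not> par g l" using par_trans[of g l h] lL assms par_sym by blast
        then obtain P where P: "P \<in> g" "P \<in> l" unfolding par_def by blast
        then have "f P = l" using fP[OF P(1)] cls_through_uniq[of h l "f P" P] assms l by blast
        then show "l \<in> f ` g" using P by blast
      qed
    qed
  qed
  then show ?thesis by (rule bij_betw_same_card)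
qed

lemma three: "\<exists>g1 g2 g3. g1 \<in> L \<and> g2 \<in> L \<and> g3 \<in> L \<and> \<not> par g1 g2 \<and> \<not> par g1 g3 \<and> \<not> par g2 g3"
proof -
  obtain A B D where h: "A \<in> C" "B \<in> C" "D \<in> C" "A \<noteq> B" "B \<noteq> D" "A \<noteq> D"
    "\<not> (\<exists>l\<in>L. A \<in> l \<and> B \<in> l \<and> D \<in> l)" using a4 by blast
  obtain ab where ab: "ab \<in> L" "A \<in> ab" "B \<in> ab" using a1 h by blast
  obtain ad where ad: "ad \<in> L" "A \<in> ad" "D \<in> ad" using a1 h by blast
  obtain bd where bd: "bd \<in> L" "B \<in> bd" "D \<in> bd" using a1 h by blast
  have "A \<notin> bd" using h bd by blast
  then obtain k where k: "k \<in> L" "A \<in> k" "k \<inter> bd = {}" using a2 bd h by blast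
  have 1: "\<not> par ab ad" using ab ad h unfolding par_def by blast
  have 2: "\<not> par ab bd" using ab bd h unfolding par_def by blast
  have 3: "\<not> par ad bd" using ad bd h unfolding par_def by blast
  have "par k bd" using k unfolding par_def by blast
  then have "\<not> par ab k" "\<not> par ad k" using 2 3 par_trans ab ad bd k by blast+
  then show ?thesis using 1 ab ad k by blast
qed

definition t :: nat where "t = card (cls ` L) - 1"

lemma pp2: "a \<in> L \<Longrightarrow> b \<in> L \<Longrightarrow> g \<in> L \<Longrightarrow> par a g \<Longrightarrow> par b g \<Longrightarrow> par a b"
  using par_trans par_sym by blast

lemma two_nonpar: assumes "g \<in> L" "h \<in> L" shows "\<exists>k\<in>L. \<not> par k g \<and> \<not> par k h"
proof -
  obtain g1 g2 g3 where G: "g1 \<in> L" "g2 \<in> L" "g3 \<in> L" "\<not> par g1 g2" "\<not> par g1 g3" "\<not> par g2 g3"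
    using three by blast
  have "\<not>(par g1 g \<and> par g2 g)" "\<not>(par g1 g \<and> par g3 g)" "\<not>(par g2 g \<and> par g3 g)"
    "\<not>(par g1 h \<and> par g2 h)" "\<not>(par g1 h \<and> par g3 h)" "\<not>(par g2 h \<and> par g3 h)"
    using pp2[of g1 g2 g] pp2[of g1 g3 g] pp2[of g2 g3 g] pp2[of g1 g2 h] pp2[of g1 g3 h] pp2[of g2 g3 h] G assms
    by auto
  then show ?thesis using G by blast
qed

lemma some_nonpar: "g \<in> L \<Longrightarrow> \<exists>h\<in>L. \<not> par g h"
  using two_nonpar[of g g] par_sym by blast

lemma cls_card_all: assumes "g \<in> L" "h \<in> L" shows "card (cls g) = card (cls h)"
proof -
  obtain k where "k \<in> L" "\<not> par k g" "\<not> par k h" using two_nonpar assms by blast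
  then have "card k = card (cls g)" "card k = card (cls h)" using card_line_cls[of k g] card_line_cls[of k h] assms by auto
  then show ?thesis by simp
qed

lemma line_card: assumes "g \<in> L" "h \<in> L" shows "card g = card (cls h)"
proof -
  obtain k where k: "k \<in> L" "\<not> par g k" using some_nonpar assms by blast
  then have "card g = card (cls k)" using card_line_cls assms by blast
  also have "\<dots> = card (cls h)" using cls_card_all assms k by blast
  finally show ?thesis .
qed

lemma some_line: "\<exists>g. g \<in> L"
  using three by blast

lemma lQ: assumes "\<pi> \<in> cls ` L" "Q \<in> C"
  shows "(THE l. l \<in> \<pi> \<and> Q \<in> l) \<in> \<pi> \<and> Q \<in> (THE l. l \<in> \<pi> \<and> Q \<in> l)"
proof -
  obtain g where g: "g \<in> L" "\<pi> = cls g" using assms by blast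
  then have "\<exists>!l. l \<in> \<pi> \<and> Q \<in> l" using cls_through[OF g(1) assms(2)] cls_through_uniq[OF g(1)] by blast
  then show ?thesis by (rule theI')
qed

lemma lQ_eq: assumes "g \<in> L" "\<pi> = cls g" "l \<in> \<pi>" "Q \<in> l"
  shows "(THE l. l \<in> \<pi> \<and> Q \<in> l) = l"
proof -
  have e: "\<exists>!l. l \<in> \<pi> \<and> Q \<in> l" using assms cls_through_uniq[OF assms(1)] by blast
  show ?thesis by (rule the1_equality[OF e]) (use assms in simp)
qed

lemma main_counts:
  "card (cls ` L) = t + 1 \<and> 2 \<le> t \<and> card C = t * t \<and> (\<forall>l\<in>L. card l = t) \<and> (\<forall>\<pi>\<in>cls ` L. card \<pi> = t)"
proof -
  obtain g0 where g0: "g0 \<in> L" using some_line by blast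
  define s where "s = card (cls g0)"
  have lines: "\<forall>l\<in>L. card l = s" using line_card g0 s_def by blast
  have clss: "\<forall>\<pi>\<in>cls ` L. card \<pi> = s" using cls_card_all g0 s_def by blast
  have s2: "2 \<le> s"
  proof -
    obtain P Q where "P \<noteq> Q" "P \<in> g0" "Q \<in> g0" using a3 g0 by blast
    then have "card {P, Q} \<le> card g0" using finl[OF g0] by (intro card_mono) auto
    then have "2 \<le> card g0" using \<open>P \<noteq> Q\<close> by simp
    then show ?thesis using lines g0 by simp
  qed
  have CU: "C = \<Union>(cls g0)"
  proof
    show "C \<subseteq> \<Union>(cls g0)" using cls_through g0 by blast
    show "\<Union>(cls g0) \<subseteq> C" using lsub unfolding cls_def by blast
  qed
  have "card (\<Union>(cls g0)) = sum card (cls g0)"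
  proof (rule card_Union_disjoint)
    show "pairwise disjnt (cls g0)"
      unfolding pairwise_def disjnt_def using cls_through_uniq[OF g0] by blast
    show "\<And>A. A \<in> cls g0 \<Longrightarrow> finite A" using finl unfolding cls_def by blast
  qed
  also have "\<dots> = s * s" using lines s_def unfolding cls_def by simp
  finally have cardC: "card C = s * s" using CU by simp
  obtain Q where Q: "Q \<in> C" using a3[OF g0] lsub[OF g0] by blast
  define lq where "lq \<pi> = (THE l. l \<in> \<pi> \<and> Q \<in> l)" for \<pi>
  have lq: "\<And>\<pi>. \<pi> \<in> cls ` L \<Longrightarrow> lq \<pi> \<in> \<pi> \<and> Q \<in> lq \<pi>" using lQ Q unfolding lq_def by blast
  have lqL: "\<And>\<pi>. \<pi> \<in> cls ` L \<Longrightarrow> lq \<pi> \<in> L" using lq unfolding cls_def by blast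
  have finI: "finite (cls ` L)" using finL by simp
  have cover: "C - {Q} = (\<Union>\<pi>\<in>cls ` L. lq \<pi> - {Q})"
  proof
    show "(\<Union>\<pi>\<in>cls ` L. lq \<pi> - {Q}) \<subseteq> C - {Q}" using lqL lsub by blast
    show "C - {Q} \<subseteq> (\<Union>\<pi>\<in>cls ` L. lq \<pi> - {Q})"
    proof
      fix P assume P: "P \<in> C - {Q}"
      then obtain l where l: "l \<in> L" "P \<in> l" "Q \<in> l" using a1 Q by blast
      have "lq (cls l) = l" unfolding lq_def using lQ_eq[OF l(1) refl self_cls[OF l(1)] l(3)] .
      then show "P \<in> (\<Union>\<pi>\<in>cls ` L. lq \<pi> - {Q})" using l P by blast
    qed
  qed
  have "card (\<Union>\<pi>\<in>cls ` L. lq \<pi> - {Q}) = (\<Sum>\<pi>\<in>cls ` L. card (lq \<pi> - {Q}))"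
  proof (rule card_UN_disjoint[OF finI])
    show "\<forall>i\<in>cls ` L. finite (lq i - {Q})" using lqL finl by blast
    show "\<forall>i\<in>cls ` L. \<forall>j\<in>cls ` L. i \<noteq> j \<longrightarrow> (lq i - {Q}) \<inter> (lq j - {Q}) = {}"
    proof (intro ballI impI)
      fix i j assume ij: "i \<in> cls ` L" "j \<in> cls ` L" "i \<noteq> j"
      have ne: "lq i \<noteq> lq j"
      proof
        assume e: "lq i = lq j"
        obtain gi gj where "gi \<in> L" "i = cls gi" "gj \<in> L" "j = cls gj" using ij by blast
        then have "cls (lq i) = i" "cls (lq j) = j" using mem_cls lq ij by auto
        then show False using e ij by simp
      qed
      show "(lq i - {Q}) \<inter> (lq j - {Q}) = {}"
        using uniq[of "lq i" "lq j" Q] lq lqL ij ne by blast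
    qed
  qed
  also have "\<dots> = (\<Sum>\<pi>\<in>cls ` L. s - 1)"
    by (rule sum.cong) (use lq lqL lines finl in auto)
  also have "\<dots> = card (cls ` L) * (s - 1)" by simp
  finally have "card (C - {Q}) = card (cls ` L) * (s - 1)" using cover by simp
  moreover have "card (C - {Q}) = s * s - 1" using cardC Q fin by simp
  moreover have "s * s - 1 = (s + 1) * (s - 1)" using s2 by (cases s) (auto simp: algebra_simps)
  ultimately have "card (cls ` L) * (s - 1) = (s + 1) * (s - 1)" by simp
  moreover have "s - 1 \<noteq> 0" using s2 by simp
  ultimately have k: "card (cls ` L) = s + 1" using mult_right_cancel by blast
  then have "t = s" unfolding t_def by simp
  then show ?thesis using k s2 cardC lines clss by simp
qed

end


locale H2 =
  fixes Pts :: "'p set" and Lns :: "'l set" and I :: "'p \<Rightarrow> 'l \<Rightarrow> bool"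
    and Pts' :: "'p set" and Lns' :: "'l set" and I' :: "'p \<Rightarrow> 'l \<Rightarrow> bool"
    and phi :: "'p \<Rightarrow> 'p" and psi :: "'l \<Rightarrow> 'l"
  assumes finP: "finite Pts" and finLn: "finite Lns"
    and hax1: "\<forall>P\<in>Pts. \<forall>Q\<in>Pts. \<exists>g\<in>Lns. I P g \<and> I Q g"
    and hax2: "\<forall>g\<in>Lns. \<forall>h\<in>Lns. \<exists>P\<in>Pts. I P g \<and> I P h"
    and pp: "projective_plane Pts' Lns' I'"
    and phiim: "phi ` Pts = Pts'" and psiim: "psi ` Lns = Lns'"
    and inc: "\<forall>P\<in>Pts. \<forall>g\<in>Lns. I P g \<longrightarrow> I' (phi P) (psi g)"
    and phiN: "\<forall>P\<in>Pts. \<forall>Q\<in>Pts. phi P = phi Q \<longleftrightarrow> pnb Pts Lns I P Q"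
    and psiN: "\<forall>g\<in>Lns. \<forall>h\<in>Lns. psi g = psi h \<longleftrightarrow> lnb Pts Lns I g h"
    and aff: "\<forall>P\<in>Pts. affine_plane (nbhd_points Pts Lns I P) (nbhd_lines Pts Lns I P) (\<lambda>x L. x \<in> L)"
begin

lemmas ppx = pp[unfolded projective_plane_def]
lemmas pp1 = ppx[THEN conjunct1]
lemmas pp2 = ppx[THEN conjunct2, THEN conjunct1]
lemmas pp3 = ppx[THEN conjunct2, THEN conjunct2]

lemma ex1_eq': "\<exists>!x. P x \<Longrightarrow> P a \<Longrightarrow> P b \<Longrightarrow> a = b" by blast

lemma join_ex: "x \<in> Pts' \<Longrightarrow> z \<in> Pts' \<Longrightarrow> x \<noteq> z \<Longrightarrow> \<exists>y. y \<in> Lns' \<and> I' x y \<and> I' z y"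
  using pp1 by blast

lemma join_uniq: assumes "x \<in> Pts'" "z \<in> Pts'" "x \<noteq> z" "y \<in> Lns'" "y' \<in> Lns'"
  "I' x y" "I' z y" "I' x y'" "I' z y'" shows "y = y'"
  by (rule ex1_eq'[OF pp1[rule_format, OF assms(1-3)]]) (use assms in auto)

lemma meet_ex: "y \<in> Lns' \<Longrightarrow> y' \<in> Lns' \<Longrightarrow> y \<noteq> y' \<Longrightarrow> \<exists>x. x \<in> Pts' \<and> I' x y \<and> I' x y'"
  using pp2 by blast

lemma meet_uniq: assumes "y \<in> Lns'" "y' \<in> Lns'" "y \<noteq> y'" "x \<in> Pts'" "z \<in> Pts'"
  "I' x y" "I' x y'" "I' z y" "I' z y'" shows "x = z"
  by (rule ex1_eq'[OF pp2[rule_format, OF assms(1-3)]]) (use assms in auto)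

lemma off: assumes "y \<in> Lns'" shows "\<exists>z\<in>Pts'. \<not> I' z y"
proof (rule ccontr)
  assume n: "\<not> (\<exists>z\<in>Pts'. \<not> I' z y)"
  obtain S where S: "S \<subseteq> Pts'" "card S = 4" "\<forall>T\<subseteq>S. card T = 3 \<longrightarrow> \<not> collinear Lns' I' T"
    using pp3 by blast
  obtain T where T: "T \<subseteq> S" "card T = 3" using obtain_subset_with_card_n[of 3 S] S(2) by auto
  have "collinear Lns' I' T" unfolding collinear_def using T S n assms by blast
  then show False using S T by blast
qed

lemma phi_in: "P \<in> Pts \<Longrightarrow> phi P \<in> Pts'" using phiim by blast
lemma psi_in: "g \<in> Lns \<Longrightarrow> psi g \<in> Lns'" using psiim by blast

lemma nb: assumes "P \<in> Pts" "Q \<in> Pts" "g \<in> Lns" "h \<in> Lns" "g \<noteq> h" "I P g" "I Q g" "I P h" "I Q h"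
  shows "phi P = phi Q"
proof -
  have "pnb Pts Lns I P Q" unfolding pnb_def using assms by blast
  then show ?thesis using phiN assms by blast
qed

lemma lnb': assumes "g \<in> Lns" "h \<in> Lns" "P \<in> Pts" "Q \<in> Pts" "P \<noteq> Q" "I P g" "I P h" "I Q g" "I Q h"
  shows "psi g = psi h"
proof -
  have "lnb Pts Lns I g h" unfolding lnb_def using assms by blast
  then show ?thesis using psiN assms by blast
qed

lemma psi_eqD: assumes "g \<in> Lns" "h \<in> Lns" "psi g = psi h" "g \<noteq> h"
  shows "\<exists>P\<in>Pts. \<exists>Q\<in>Pts. P \<noteq> Q \<and> I P g \<and> I P h \<and> I Q g \<and> I Q h"
proof -
  have "lnb Pts Lns I g h" using psiN assms by blast
  then show ?thesis unfolding lnb_def using assms by blast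
qed

definition C :: "'p \<Rightarrow> 'p set" where "C x = {Q \<in> Pts. phi Q = x}"
definition R :: "'p \<Rightarrow> 'l \<Rightarrow> 'p set" where "R x g = {Q \<in> Pts. phi Q = x \<and> I Q g}"
definition NL :: "'p \<Rightarrow> 'p set set" where "NL x = {R x g | g. g \<in> Lns \<and> R x g \<noteq> {}}"
definition Pi :: "'p \<Rightarrow> 'l \<Rightarrow> 'p set set" where "Pi x y = {R x g | g. g \<in> Lns \<and> psi g = y}"
definition G :: "'l \<Rightarrow> 'l set" where "G y = {g \<in> Lns. psi g = y}"

lemma nbhd_eq: assumes "P \<in> Pts"
  shows "nbhd_points Pts Lns I P = C (phi P)" "nbhd_lines Pts Lns I P = NL (phi P)"
proof -
  have e: "\<And>Q. Q \<in> Pts \<Longrightarrow> pnb Pts Lns I Q P \<longleftrightarrow> phi Q = phi P" using phiN assms by blast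
  show n: "nbhd_points Pts Lns I P = C (phi P)" unfolding nbhd_points_def C_def using e by blast
  have "\<And>g. restr_line Pts Lns I P g = R (phi P) g" unfolding restr_line_def R_def n C_def by blast
  then show "nbhd_lines Pts Lns I P = NL (phi P)" unfolding nbhd_lines_def NL_def by simp
qed

lemma affx: "x \<in> Pts' \<Longrightarrow> affp (C x) (NL x)"
proof -
  assume "x \<in> Pts'"
  then obtain P where P: "P \<in> Pts" "x = phi P" using phiim by blast
  show "affp (C x) (NL x)"
  proof
    show "affine_plane (C x) (NL x) (\<lambda>x L. x \<in> L)" using aff P nbhd_eq by metis
    show "NL x \<subseteq> Pow (C x)" unfolding NL_def R_def C_def by blast
    show "finite (C x)" unfolding C_def using finP by simp
  qed
qed

lemma meet_class: assumes g: "g \<in> Lns" and x: "x \<in> Pts'" and xi: "I' x (psi g)"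
  shows "\<exists>Q\<in>Pts. phi Q = x \<and> I Q g"
proof -
  obtain z where z: "z \<in> Pts'" "\<not> I' z (psi g)" using off psi_in g by blast
  obtain Q0 where Q0: "Q0 \<in> Pts" "phi Q0 = x" using x phiim by blast
  obtain Z where Z: "Z \<in> Pts" "phi Z = z" using z phiim by blast
  obtain h where h: "h \<in> Lns" "I Q0 h" "I Z h" using hax1 Q0 Z by blast
  have hi: "I' x (psi h)" "I' z (psi h)" using inc h Q0 Z by auto
  then have ne: "psi h \<noteq> psi g" using z by auto
  obtain R0 where R0: "R0 \<in> Pts" "I R0 g" "I R0 h" using hax2 g h by blast
  have "I' (phi R0) (psi g)" "I' (phi R0) (psi h)" using inc R0 g h by auto
  then have "phi R0 = x" using meet_uniq[of "psi g" "psi h" "phi R0" x] psi_in g h ne phi_in R0 x xi hi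
    by auto
  then show ?thesis using R0 by blast
qed

lemma R_ne: assumes "g \<in> Lns" "x \<in> Pts'" shows "R x g \<noteq> {} \<longleftrightarrow> I' x (psi g)"
proof
  assume "R x g \<noteq> {}"
  then obtain Q where "Q \<in> Pts" "phi Q = x" "I Q g" unfolding R_def by blast
  then show "I' x (psi g)" using inc assms by blast
next
  assume "I' x (psi g)"
  then show "R x g \<noteq> {}" using meet_class assms unfolding R_def by blast
qed

lemma R_NL: assumes "g \<in> Lns" "x \<in> Pts'" "I' x (psi g)" shows "R x g \<in> NL x"
  using R_ne assms unfolding NL_def by blast

lemma restr_same: assumes g: "g \<in> Lns" and h: "h \<in> Lns" and e: "psi g = psi h" and x: "x \<in> Pts'"
  and Q: "Q \<in> R x g" "Q \<in> R x h" shows "R x g = R x h"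
proof (cases "g = h")
  case True then show ?thesis by simp
next
  case False
  interpret A: affp "C x" "NL x" using affx[OF x] .
  obtain P1 P2 where P: "P1 \<in> Pts" "P2 \<in> Pts" "P1 \<noteq> P2" "I P1 g" "I P1 h" "I P2 g" "I P2 h"
    using psi_eqD[OF g h e False] by blast
  have Qs: "Q \<in> Pts" "phi Q = x" "I Q g" "I Q h" using Q unfolding R_def by auto
  have "phi P1 = phi Q" using nb[of P1 Q g h] P Qs g h False by auto
  moreover have "phi P2 = phi Q" using nb[of P2 Q g h] P Qs g h False by auto
  ultimately have in12: "P1 \<in> R x g" "P1 \<in> R x h" "P2 \<in> R x g" "P2 \<in> R x h" using P Qs unfolding R_def by auto
  have "R x g \<in> NL x" "R x h \<in> NL x" using Q g h unfolding NL_def by blast+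
  then show ?thesis using A.uniq in12 P(3) by blast
qed

lemma restr_diff: assumes g: "g \<in> Lns" and h: "h \<in> Lns" and ne: "psi g \<noteq> psi h" and x: "x \<in> Pts'"
  and xg: "I' x (psi g)" and xh: "I' x (psi h)"
  shows "R x g \<inter> R x h \<noteq> {}" "R x g \<noteq> R x h"
proof -
  interpret A: affp "C x" "NL x" using affx[OF x] .
  obtain R0 where R0: "R0 \<in> Pts" "I R0 g" "I R0 h" using hax2 g h by blast
  have "I' (phi R0) (psi g)" "I' (phi R0) (psi h)" using inc R0 g h by auto
  then have "phi R0 = x" using meet_uniq[of "psi g" "psi h" "phi R0" x] psi_in g h ne phi_in R0 x xg xh
    by auto
  then show "R x g \<inter> R x h \<noteq> {}" using R0 unfolding R_def by blast
  show "R x g \<noteq> R x h"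
  proof
    assume e: "R x g = R x h"
    have "R x g \<in> NL x" using R_NL g x xg by blast
    then obtain P Q where "P \<noteq> Q" "P \<in> R x g" "Q \<in> R x g" using A.a3 by blast
    then have "psi g = psi h" using lnb'[of g h P Q] g h e unfolding R_def by auto
    then show False using ne by simp
  qed
qed

lemma clsPi1: assumes x: "x \<in> Pts'" and g: "g \<in> Lns" "I' x (psi g)"
  shows "affp.cls (NL x) (R x g) \<subseteq> Pi x (psi g)"
proof -
  interpret A: affp "C x" "NL x" using affx[OF x] .
  show ?thesis
  proof
    fix L assume L: "L \<in> A.cls (R x g)"
    then have LN: "L \<in> NL x" and par: "A.par (R x g) L" unfolding A.cls_def by auto
    then obtain h where h: "h \<in> Lns" "L = R x h" "R x h \<noteq> {}" using LN unfolding NL_def by blast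
    have xh: "I' x (psi h)" using R_ne[OF h(1) x] h(3) by simp
    have "psi g = psi h"
    proof (rule ccontr)
      assume ne: "psi g \<noteq> psi h"
      note d = restr_diff[OF g(1) h(1) ne x g(2) xh]
      have "R x g = R x h \<or> R x g \<inter> R x h = {}" using par h(2) unfolding A.par_def by simp
      then show False using d by simp
    qed
    then show "L \<in> Pi x (psi g)" using h(1,2) unfolding Pi_def by auto
  qed
qed

lemma clsPi2: assumes x: "x \<in> Pts'" and g: "g \<in> Lns" "I' x (psi g)"
  shows "Pi x (psi g) \<subseteq> affp.cls (NL x) (R x g)"
proof -
  interpret A: affp "C x" "NL x" using affx[OF x] .
  show ?thesis
  proof
    fix L assume "L \<in> Pi x (psi g)"
    then obtain h where h: "h \<in> Lns" "psi h = psi g" "L = R x h" unfolding Pi_def by blast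
    have hx: "I' x (psi h)" using h(2) g(2) by simp
    have LN: "L \<in> NL x" using R_NL[OF h(1) x hx] h(3) by simp
    have e: "psi g = psi h" using h(2) by simp
    have "R x g = R x h \<or> R x g \<inter> R x h = {}" using restr_same[OF g(1) h(1) e x] by blast
    then have "A.par (R x g) L" unfolding A.par_def h(3) .
    then show "L \<in> A.cls (R x g)" using LN unfolding A.cls_def by simp
  qed
qed

lemma clsPi: assumes x: "x \<in> Pts'" and g: "g \<in> Lns" "I' x (psi g)"
  shows "affp.cls (NL x) (R x g) = Pi x (psi g)"
  using clsPi1[OF assms] clsPi2[OF assms] by (rule equalityI)

lemma Pi_bij: assumes x: "x \<in> Pts'"
  shows "bij_betw (Pi x) (lines_through Lns' I' x) (parallel_classes (C x) (NL x) (\<lambda>x L. x \<in> L))"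
proof -
  interpret A: affp "C x" "NL x" using affx[OF x] .
  have pre: "\<exists>g. g \<in> Lns \<and> psi g = y" if "y \<in> Lns'" for y using that psiim by blast
  show ?thesis unfolding A.pc_eq bij_betw_def
  proof (intro conjI)
    show "inj_on (Pi x) (lines_through Lns' I' x)"
    proof (rule inj_onI)
      fix y1 y2 assume y: "y1 \<in> lines_through Lns' I' x" "y2 \<in> lines_through Lns' I' x" "Pi x y1 = Pi x y2"
      have y1: "y1 \<in> Lns'" "I' x y1" and y2: "y2 \<in> Lns'" "I' x y2" using y(1,2) unfolding lines_through_def by auto
      obtain g1 where g1: "g1 \<in> Lns" "psi g1 = y1" using pre y1(1) by blast
      have "R x g1 \<in> Pi x y1" using g1 unfolding Pi_def by blast
      then have "R x g1 \<in> Pi x y2" using y(3) by simp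
      then obtain h where h: "h \<in> Lns" "psi h = y2" "R x g1 = R x h" unfolding Pi_def by blast
      show "y1 = y2"
      proof (rule ccontr)
        assume ne: "y1 \<noteq> y2"
        have "psi g1 \<noteq> psi h" "I' x (psi g1)" "I' x (psi h)" using ne g1 h y1 y2 by auto
        then have "R x g1 \<noteq> R x h" using restr_diff(2)[OF g1(1) h(1) _ x] by blast
        then show False using h(3) by simp
      qed
    qed
    show "Pi x ` lines_through Lns' I' x = A.cls ` NL x"
    proof
      show "Pi x ` lines_through Lns' I' x \<subseteq> A.cls ` NL x"
      proof
        fix P assume "P \<in> Pi x ` lines_through Lns' I' x"
        then obtain y where y: "y \<in> Lns'" "I' x y" "P = Pi x y" unfolding lines_through_def by blast
        obtain g where g: "g \<in> Lns" "psi g = y" using pre y(1) by blast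
        have xg: "I' x (psi g)" using g y by simp
        have "P = A.cls (R x g)" using clsPi[OF x g(1) xg] y(3) g(2) by simp
        moreover have "R x g \<in> NL x" using R_NL[OF g(1) x xg] .
        ultimately show "P \<in> A.cls ` NL x" by blast
      qed
      show "A.cls ` NL x \<subseteq> Pi x ` lines_through Lns' I' x"
      proof
        fix P assume "P \<in> A.cls ` NL x"
        then obtain g where g: "g \<in> Lns" "R x g \<noteq> {}" "P = A.cls (R x g)" unfolding NL_def by blast
        have xg: "I' x (psi g)" using R_ne[OF g(1) x] g(2) by simp
        have "P = Pi x (psi g)" using clsPi[OF x g(1) xg] g(3) by simp
        moreover have "psi g \<in> lines_through Lns' I' x" using xg psi_in[OF g(1)] unfolding lines_through_def by simp
        ultimately show "P \<in> Pi x ` lines_through Lns' I' x" by blast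
      qed
    qed
  qed
qed

definition tx :: "'p \<Rightarrow> nat" where
  "tx x = card (parallel_classes (C x) (NL x) (\<lambda>x L. x \<in> L)) - 1"

lemma tx_props: assumes x: "x \<in> Pts'"
  shows "2 \<le> tx x" "card (C x) = tx x * tx x" "\<forall>L\<in>NL x. card L = tx x"
    "card (lines_through Lns' I' x) = tx x + 1"
    "\<And>y. y \<in> Lns' \<Longrightarrow> I' x y \<Longrightarrow> card (Pi x y) = tx x"
    "\<And>y. y \<in> Lns' \<Longrightarrow> I' x y \<Longrightarrow> Pi x y \<in> parallel_classes (C x) (NL x) (\<lambda>x L. x \<in> L)"
proof -
  interpret A: affp "C x" "NL x" using affx[OF x] .
  have t: "A.t = tx x" unfolding A.t_def tx_def A.pc_eq ..
  note mc = A.main_counts[unfolded t]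
  show "2 \<le> tx x" "card (C x) = tx x * tx x" "\<forall>L\<in>NL x. card L = tx x" using mc by auto
  have b: "bij_betw (Pi x) (lines_through Lns' I' x) (A.cls ` NL x)" using Pi_bij[OF x] unfolding A.pc_eq .
  show "card (lines_through Lns' I' x) = tx x + 1" using bij_betw_same_card[OF b] mc by simp
  show pin: "\<And>y. y \<in> Lns' \<Longrightarrow> I' x y \<Longrightarrow> Pi x y \<in> parallel_classes (C x) (NL x) (\<lambda>x L. x \<in> L)"
  proof -
    fix y assume "y \<in> Lns'" "I' x y"
    then have "y \<in> lines_through Lns' I' x" unfolding lines_through_def by simp
    then show "Pi x y \<in> parallel_classes (C x) (NL x) (\<lambda>x L. x \<in> L)"
      using Pi_bij[OF x] unfolding bij_betw_def by blast
  qed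
  show "\<And>y. y \<in> Lns' \<Longrightarrow> I' x y \<Longrightarrow> card (Pi x y) = tx x"
  proof -
    fix y assume "y \<in> Lns'" "I' x y"
    then have "Pi x y \<in> A.cls ` NL x" using pin A.pc_eq by simp
    then show "card (Pi x y) = tx x" using mc by blast
  qed
qed

lemma G_bij: assumes y: "y \<in> Lns'" and x: "x1 \<in> Pts'" "x2 \<in> Pts'" "x1 \<noteq> x2" "I' x1 y" "I' x2 y"
  shows "bij_betw (\<lambda>g. (R x1 g, R x2 g)) (G y) (Pi x1 y \<times> Pi x2 y)"
  unfolding bij_betw_def
proof (intro conjI)
  show "inj_on (\<lambda>g. (R x1 g, R x2 g)) (G y)"
  proof (rule inj_onI)
    fix g h assume gh: "g \<in> G y" "h \<in> G y" "(R x1 g, R x2 g) = (R x1 h, R x2 h)"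
    then have g: "g \<in> Lns" "psi g = y" and h: "h \<in> Lns" "psi h = y" unfolding G_def by auto
    have x1g: "I' x1 (psi g)" "I' x2 (psi g)" using g x by auto
    obtain A where A: "A \<in> Pts" "phi A = x1" "I A g" using meet_class[OF g(1) x(1) x1g(1)] by blast
    obtain B where B: "B \<in> Pts" "phi B = x2" "I B g" using meet_class[OF g(1) x(2) x1g(2)] by blast
    have "A \<in> R x1 g" "B \<in> R x2 g" using A B unfolding R_def by auto
    then have "A \<in> R x1 h" "B \<in> R x2 h" using gh(3) by auto
    then have Ah: "I A h" "I B h" unfolding R_def by auto
    show "g = h"
    proof (rule ccontr)
      assume "g \<noteq> h"
      then have "phi A = phi B" using nb[OF A(1) B(1) g(1) h(1) _ A(3) B(3) Ah] by blast
      then show False using A(2) B(2) x(3) by simp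
    qed
  qed
  show "(\<lambda>g. (R x1 g, R x2 g)) ` G y = Pi x1 y \<times> Pi x2 y"
  proof
    show "(\<lambda>g. (R x1 g, R x2 g)) ` G y \<subseteq> Pi x1 y \<times> Pi x2 y" unfolding G_def Pi_def by blast
    show "Pi x1 y \<times> Pi x2 y \<subseteq> (\<lambda>g. (R x1 g, R x2 g)) ` G y"
    proof
      fix p assume "p \<in> Pi x1 y \<times> Pi x2 y"
      then obtain g1 g2 where g: "g1 \<in> Lns" "psi g1 = y" "g2 \<in> Lns" "psi g2 = y" "p = (R x1 g1, R x2 g2)"
        unfolding Pi_def by blast
      have xi: "I' x1 (psi g1)" "I' x2 (psi g2)" using g x by auto
      obtain A where A: "A \<in> Pts" "phi A = x1" "I A g1" using meet_class[OF g(1) x(1) xi(1)] by blast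
      obtain B where B: "B \<in> Pts" "phi B = x2" "I B g2" using meet_class[OF g(3) x(2) xi(2)] by blast
      obtain h where h: "h \<in> Lns" "I A h" "I B h" using hax1 A(1) B(1) by blast
      have "I' (phi A) (psi h)" "I' (phi B) (psi h)" using inc h A(1) B(1) by auto
      then have "I' x1 (psi h)" "I' x2 (psi h)" using A(2) B(2) by auto
      then have hy: "psi h = y" using join_uniq[OF x(1) x(2) x(3) psi_in[OF h(1)] y] x(4,5) by blast
      have e1: "psi h = psi g1" "psi h = psi g2" using hy g by auto
      have "A \<in> R x1 h" "A \<in> R x1 g1" "B \<in> R x2 h" "B \<in> R x2 g2" using A B h unfolding R_def by auto
      then have "R x1 h = R x1 g1" "R x2 h = R x2 g2"
        using restr_same[OF h(1) g(1) e1(1) x(1)] restr_same[OF h(1) g(3) e1(2) x(2)] by auto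
      moreover have "h \<in> G y" using h(1) hy unfolding G_def by simp
      ultimately show "p \<in> (\<lambda>g. (R x1 g, R x2 g)) ` G y" using g(5) by (metis (no_types, lifting) image_eqI)
    qed
  qed
qed

lemma card_G: assumes "y \<in> Lns'" "x1 \<in> Pts'" "x2 \<in> Pts'" "x1 \<noteq> x2" "I' x1 y" "I' x2 y"
  shows "card (G y) = tx x1 * tx x2"
proof -
  have "card (G y) = card (Pi x1 y \<times> Pi x2 y)" using bij_betw_same_card[OF G_bij[OF assms]] .
  also have "\<dots> = card (Pi x1 y) * card (Pi x2 y)" by (rule card_cartesian_product)
  also have "\<dots> = tx x1 * tx x2" using tx_props(5)[OF assms(2) assms(1) assms(5)] tx_props(5)[OF assms(3) assms(1) assms(6)] by simp
  finally show ?thesis .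
qed

lemma points_lines: assumes y: "y \<in> Lns'" and z: "z \<in> Pts'" "\<not> I' z y"
  shows "card (points_on Pts' I' y) = card (lines_through Lns' I' z)"
proof -
  define j where "j x = (THE l. l \<in> Lns' \<and> I' z l \<and> I' x l)" for x
  have jx: "j x \<in> Lns' \<and> I' z (j x) \<and> I' x (j x)" if "x \<in> points_on Pts' I' y" for x
  proof -
    have xx: "x \<in> Pts'" "I' x y" "x \<noteq> z" using that z unfolding points_on_def by auto
    show ?thesis unfolding j_def by (rule theI'[OF pp1[rule_format, OF z(1) xx(1) xx(3)[symmetric]]])
  qed
  have "bij_betw j (points_on Pts' I' y) (lines_through Lns' I' z)"
    unfolding bij_betw_def
  proof (intro conjI)
    show "inj_on j (points_on Pts' I' y)"
    proof (rule inj_onI)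
      fix a b assume ab: "a \<in> points_on Pts' I' y" "b \<in> points_on Pts' I' y" "j a = j b"
      have a: "a \<in> Pts'" "I' a y" and b: "b \<in> Pts'" "I' b y" using ab(1,2) unfolding points_on_def by auto
      have ja: "j a \<in> Lns'" "I' z (j a)" "I' a (j a)" using jx[OF ab(1)] by auto
      have jb: "I' b (j a)" using jx[OF ab(2)] ab(3) by simp
      show "a = b"
      proof (rule ccontr)
        assume ne: "a \<noteq> b"
        have "y = j a" using join_uniq[OF a(1) b(1) ne y ja(1) a(2) b(2) ja(3) jb] .
        then show False using ja(2) z(2) by simp
      qed
    qed
    show "j ` points_on Pts' I' y = lines_through Lns' I' z"
    proof
      show "j ` points_on Pts' I' y \<subseteq> lines_through Lns' I' z" using jx unfolding lines_through_def by blast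
      show "lines_through Lns' I' z \<subseteq> j ` points_on Pts' I' y"
      proof
        fix l assume l: "l \<in> lines_through Lns' I' z"
        then have l1: "l \<in> Lns'" "I' z l" unfolding lines_through_def by auto
        then have ly: "l \<noteq> y" using z by auto
        obtain x where x: "x \<in> Pts'" "I' x l" "I' x y" using meet_ex[OF l1(1) y ly] by blast
        then have xp: "x \<in> points_on Pts' I' y" unfolding points_on_def by auto
        have xz: "z \<noteq> x" using x z by auto
        have jj: "j x \<in> Lns'" "I' z (j x)" "I' x (j x)" using jx[OF xp] by auto
        have "j x = l" using join_uniq[OF z(1) x(1) xz jj(1) l1(1) jj(2,3) l1(2) x(2)] .
        then show "l \<in> j ` points_on Pts' I' y" using xp by blast
      qed
    qed
  qed
  then show ?thesis by (rule bij_betw_same_card)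
qed

lemma points_card: assumes y: "y \<in> Lns'" shows "\<exists>z\<in>Pts'. card (points_on Pts' I' y) = tx z + 1"
proof -
  obtain z where z: "z \<in> Pts'" "\<not> I' z y" using off[OF y] by blast
  show ?thesis using points_lines[OF y z] tx_props(4)[OF z(1)] z(1) by auto
qed

lemma finPts': "finite Pts'" using finP phiim by auto

lemma t_const: assumes x12: "x1 \<in> Pts'" "x2 \<in> Pts'" shows "tx x1 = tx x2"
proof (cases "x1 = x2")
  case True then show ?thesis by simp
next
  case False
  obtain y where y: "y \<in> Lns'" "I' x1 y" "I' x2 y" using join_ex x12 False by blast
  obtain z where z: "z \<in> Pts'" "card (points_on Pts' I' y) = tx z + 1" using points_card y by blast
  have fin: "finite (points_on Pts' I' y)" using finPts' unfolding points_on_def by auto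
  have c3: "3 \<le> card (points_on Pts' I' y)" using z tx_props(1)[OF z(1)] by simp
  have "\<not> points_on Pts' I' y \<subseteq> {x1, x2}"
  proof
    assume "points_on Pts' I' y \<subseteq> {x1, x2}"
    then have "card (points_on Pts' I' y) \<le> card {x1, x2}" by (intro card_mono) auto
    also have "\<dots> \<le> 2" by (simp add: card_insert_if)
    finally show False using c3 by simp
  qed
  then obtain x3 where x3: "x3 \<in> Pts'" "I' x3 y" "x3 \<noteq> x1" "x3 \<noteq> x2" unfolding points_on_def by auto
  have e1: "card (G y) = tx x1 * tx x2" using card_G[OF y(1) x12 False y(2,3)] .
  have e2: "card (G y) = tx x1 * tx x3" using card_G[OF y(1) x12(1) x3(1) x3(3)[symmetric] y(2) x3(2)] .
  have e3: "card (G y) = tx x2 * tx x3" using card_G[OF y(1) x12(2) x3(1) x3(4)[symmetric] y(3) x3(2)] .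
  have p: "tx x1 > 0" "tx x3 > 0" using tx_props(1)[OF x12(1)] tx_props(1)[OF x3(1)] by auto
  have m: "tx x1 * tx x3 = tx x2 * tx x3" using e2 e3 by linarith
  show ?thesis using m p(2) by (metis mult_cancel_right gr_implies_not0)
qed

lemma Pts'_ne: "Pts' \<noteq> {}"
proof -
  obtain S where S: "S \<subseteq> Pts'" "card S = 4" using pp3 by blast
  then have "S \<noteq> {}" by auto
  then show ?thesis using S by blast
qed

definition m :: nat where "m = tx (SOME x. x \<in> Pts')"

lemma tx_m: "x \<in> Pts' \<Longrightarrow> tx x = m"
  unfolding m_def using t_const someI_ex[of "\<lambda>x. x \<in> Pts'"] Pts'_ne by blast

lemma m2: "2 \<le> m" using tx_props(1) tx_m Pts'_ne by force

lemma card_pts_line: "y \<in> Lns' \<Longrightarrow> card (points_on Pts' I' y) = m + 1"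
  using points_card tx_m by force

lemma card_lines_pt: "x \<in> Pts' \<Longrightarrow> card (lines_through Lns' I' x) = m + 1"
  using tx_props(4) tx_m by force

lemma Pi_fin: "finite (Pi x y)"
proof -
  have "Pi x y = R x ` G y" unfolding Pi_def G_def by blast
  then show ?thesis using finLn unfolding G_def by simp
qed

definition beta :: "'p \<Rightarrow> 'l \<Rightarrow> nat \<Rightarrow> 'p set" where
  "beta x y = (SOME f. bij_betw f {..<m} (Pi x y))"

definition OA :: "'l \<Rightarrow> 'l \<Rightarrow> 'p \<Rightarrow> nat" where
  "OA y g x = inv_into {..<m} (beta x y) (R x g)"

lemma beta_bij: assumes "x \<in> Pts'" "y \<in> Lns'" "I' x y" shows "bij_betw (beta x y) {..<m} (Pi x y)"
proof -
  have "card (Pi x y) = m" using tx_props(5)[OF assms(1,2,3)] tx_m[OF assms(1)] by simp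
  then have "\<exists>f. bij_betw f {..<m} (Pi x y)" using ex_bij_betw_nat_finite[OF Pi_fin[of x y]]
    by (simp add: atLeast0LessThan)
  then show ?thesis unfolding beta_def by (rule someI_ex)
qed

lemma OA_prop: assumes "x \<in> Pts'" "y \<in> Lns'" "I' x y" "g \<in> G y"
  shows "OA y g x < m" "beta x y (OA y g x) = R x g"
proof -
  have b: "bij_betw (beta x y) {..<m} (Pi x y)" using beta_bij assms by blast
  have "R x g \<in> Pi x y" using assms(4) unfolding G_def Pi_def by blast
  then have r: "R x g \<in> beta x y ` {..<m}" using b unfolding bij_betw_def by simp
  show "OA y g x < m" unfolding OA_def using inv_into_into[OF r] by simp
  show "beta x y (OA y g x) = R x g" unfolding OA_def using f_inv_into_f[OF r] .
qed

lemma OA_beta: assumes "x \<in> Pts'" "y \<in> Lns'" "I' x y" "s < m" and that: "g \<in> G y"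
  shows "OA y g x = s \<longleftrightarrow> R x g = beta x y s"
proof -
  have b: "bij_betw (beta x y) {..<m} (Pi x y)" using beta_bij assms by blast
  show ?thesis
  proof
    assume "OA y g x = s" then show "R x g = beta x y s" using OA_prop(2)[OF assms(1-3) that] by simp
  next
    assume "R x g = beta x y s"
    then show "OA y g x = s" unfolding OA_def using inv_into_f_f[of "beta x y" "{..<m}" s] b assms(4)
      unfolding bij_betw_def by simp
  qed
qed

lemma alg1: "alg1_data m Pts' Lns' I' C NL (\<lambda>y. {..<m}) G OA Pi beta"
  unfolding alg1_data_def
proof (intro conjI ballI impI)
  show "projective_plane_of_order m Pts' Lns' I'"
    unfolding projective_plane_of_order_def using pp card_pts_line card_lines_pt by blast
next
  fix x assume x: "x \<in> Pts'"
  interpret A: affp "C x" "NL x" using affx[OF x] .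
  have ee: "\<And>l. l \<in> NL x \<Longrightarrow> {P \<in> C x. P \<in> l} = l" using A.lsub by blast
  show "affine_plane_of_order m (C x) (NL x) (\<lambda>x L. x \<in> L)"
    unfolding affine_plane_of_order_def points_on_def
    using A.ap A.fin tx_props(2,3)[OF x] tx_m[OF x] ee by (auto simp: power2_eq_square)
  show "NL x \<subseteq> Pow (C x)" using A.sub .
next
  fix x assume x: "x \<in> Pts'"
  show "bij_betw (Pi x) (lines_through Lns' I' x) (parallel_classes (C x) (NL x) (\<lambda>x L. x \<in> L))"
    using Pi_bij[OF x] .
next
  fix x y assume "x \<in> Pts'" "y \<in> Lns'" "I' x y"
  then show "bij_betw (beta x y) {..<m} (Pi x y)" using beta_bij by blast
next
  fix y assume y: "y \<in> Lns'"
  have finpo: "finite (points_on Pts' I' y)" using finPts' unfolding points_on_def by auto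
  have "\<not> points_on Pts' I' y \<subseteq> {}" using card_pts_line[OF y] by auto
  then obtain x1 where x1: "x1 \<in> points_on Pts' I' y" by blast
  have "\<not> points_on Pts' I' y \<subseteq> {x1}"
  proof
    assume "points_on Pts' I' y \<subseteq> {x1}"
    then have "card (points_on Pts' I' y) \<le> card {x1}" by (intro card_mono) auto
    then show False using card_pts_line[OF y] m2 by simp
  qed
  then obtain x2 where x2: "x2 \<in> points_on Pts' I' y" "x2 \<noteq> x1" by blast
  have xx: "x1 \<in> Pts'" "I' x1 y" "x2 \<in> Pts'" "I' x2 y" using x1 x2 unfolding points_on_def by auto
  have cG: "card (G y) = m ^ 2"
    using card_G[OF y xx(1) xx(3) x2(2)[symmetric] xx(2) xx(4)] tx_m xx by (simp add: power2_eq_square)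
  show "orthogonal_array (m + 1) m (G y) (points_on Pts' I' y) {..<m} (OA y)"
    unfolding orthogonal_array_def
  proof (intro conjI ballI impI)
    show "finite (G y)" using finLn unfolding G_def by simp
    show "card (G y) = m ^ 2" using cG .
    show "finite (points_on Pts' I' y)" using finpo .
    show "card (points_on Pts' I' y) = m + 1" using card_pts_line[OF y] .
    show "finite {..<m}" by simp
    show "card {..<m} = m" by simp
  next
    fix r c assume "r \<in> G y" "c \<in> points_on Pts' I' y"
    then show "OA y r c \<in> {..<m}" using OA_prop(1)[of c y r] y unfolding points_on_def by auto
  next
    fix c1 c2 s1 s2 assume c: "c1 \<in> points_on Pts' I' y" "c2 \<in> points_on Pts' I' y" "c1 \<noteq> c2"
      and s: "s1 \<in> {..<m}" "s2 \<in> {..<m}"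
    have cc: "c1 \<in> Pts'" "I' c1 y" "c2 \<in> Pts'" "I' c2 y" using c unfolding points_on_def by auto
    have s': "s1 < m" "s2 < m" using s by auto
    have gb: "bij_betw (\<lambda>g. (R c1 g, R c2 g)) (G y) (Pi c1 y \<times> Pi c2 y)"
      using G_bij[OF y cc(1) cc(3) c(3) cc(2) cc(4)] .
    have "beta c1 y s1 \<in> Pi c1 y" "beta c2 y s2 \<in> Pi c2 y"
      using beta_bij[OF cc(1) y cc(2)] beta_bij[OF cc(3) y cc(4)] s' unfolding bij_betw_def by auto
    then have "(beta c1 y s1, beta c2 y s2) \<in> (\<lambda>g. (R c1 g, R c2 g)) ` G y" using gb unfolding bij_betw_def by simp
    then obtain g where g: "g \<in> G y" "R c1 g = beta c1 y s1" "R c2 g = beta c2 y s2" by auto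
    have ex: "g \<in> G y \<and> OA y g c1 = s1 \<and> OA y g c2 = s2"
      using g OA_beta[OF cc(1) y cc(2) s'(1)] OA_beta[OF cc(3) y cc(4) s'(2)] by blast
    show "\<exists>!r. r \<in> G y \<and> OA y r c1 = s1 \<and> OA y r c2 = s2"
    proof (rule ex1I[of _ g])
      show "g \<in> G y \<and> OA y g c1 = s1 \<and> OA y g c2 = s2" using ex .
    next
      fix r assume r: "r \<in> G y \<and> OA y r c1 = s1 \<and> OA y r c2 = s2"
      then have "R c1 r = beta c1 y s1" "R c2 r = beta c2 y s2"
        using OA_beta[OF cc(1) y cc(2) s'(1)] OA_beta[OF cc(3) y cc(4) s'(2)] by blast+
      then have "(R c1 r, R c2 r) = (R c1 g, R c2 g)" using g by simp
      then show "r = g" using gb r g(1) unfolding bij_betw_def inj_on_def by blast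
    qed
  qed
qed

definition lm :: "'l \<Rightarrow> ('p \<times> 'p) set" where
  "lm g = (\<Union>P\<in>points_on Pts' I' (psi g). {P} \<times> beta P (psi g) (OA (psi g) g P))"

lemma lm_eq: assumes g: "g \<in> Lns" shows "lm g = (\<lambda>Q. (phi Q, Q)) ` {Q \<in> Pts. I Q g}"
proof -
  have "lm g = (\<Union>P\<in>points_on Pts' I' (psi g). {P} \<times> R P g)"
    unfolding lm_def
  proof (rule SUP_cong[OF refl])
    fix P assume "P \<in> points_on Pts' I' (psi g)"
    then have "P \<in> Pts'" "I' P (psi g)" unfolding points_on_def by auto
    then show "{P} \<times> beta P (psi g) (OA (psi g) g P) = {P} \<times> R P g"
      using OA_prop(2)[of P "psi g" g] psi_in[OF g] g unfolding G_def by simp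
  qed
  also have "\<dots> = (\<lambda>Q. (phi Q, Q)) ` {Q \<in> Pts. I Q g}"
  proof
    show "(\<Union>P\<in>points_on Pts' I' (psi g). {P} \<times> R P g) \<subseteq> (\<lambda>Q. (phi Q, Q)) ` {Q \<in> Pts. I Q g}"
      unfolding R_def by auto
    show "(\<lambda>Q. (phi Q, Q)) ` {Q \<in> Pts. I Q g} \<subseteq> (\<Union>P\<in>points_on Pts' I' (psi g). {P} \<times> R P g)"
    proof
      fix z assume "z \<in> (\<lambda>Q. (phi Q, Q)) ` {Q \<in> Pts. I Q g}"
      then obtain Q where Q: "Q \<in> Pts" "I Q g" "z = (phi Q, Q)" by blast
      have "phi Q \<in> points_on Pts' I' (psi g)" using phi_in[OF Q(1)] inc Q g unfolding points_on_def by blast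
      moreover have "Q \<in> R (phi Q) g" using Q unfolding R_def by simp
      ultimately show "z \<in> (\<Union>P\<in>points_on Pts' I' (psi g). {P} \<times> R P g)" using Q(3) by blast
    qed
  qed
  finally show ?thesis .
qed

lemma iso: "isomorphic Pts Lns I (alg1_points Pts' C) (alg1_lines Pts' Lns' I' G OA beta) (\<lambda>x L. x \<in> L)"
  unfolding isomorphic_def
proof (intro exI conjI)
  let ?f = "\<lambda>Q. (phi Q, Q)"
  have finj: "inj_on ?f Pts" by (rule inj_onI) simp
  show "bij_betw ?f Pts (alg1_points Pts' C)"
    unfolding bij_betw_def alg1_points_def
  proof (intro conjI finj)
    show "?f ` Pts = Sigma Pts' C"
    proof
      show "?f ` Pts \<subseteq> Sigma Pts' C" using phi_in unfolding C_def by auto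
      show "Sigma Pts' C \<subseteq> ?f ` Pts" unfolding C_def by auto
    qed
  qed
  show "bij_betw lm Lns (alg1_lines Pts' Lns' I' G OA beta)"
    unfolding bij_betw_def
  proof (intro conjI)
    show "inj_on lm Lns"
    proof (rule inj_onI)
      fix g h assume gh: "g \<in> Lns" "h \<in> Lns" "lm g = lm h"
      then have "?f ` {Q \<in> Pts. I Q g} = ?f ` {Q \<in> Pts. I Q h}" using lm_eq by simp
      then have pe: "{Q \<in> Pts. I Q g} = {Q \<in> Pts. I Q h}"
        using inj_on_image_eq_iff[OF finj] by blast
      have y: "psi g \<in> Lns'" using psi_in gh by blast
      have "\<not> points_on Pts' I' (psi g) \<subseteq> {}" using card_pts_line[OF y] by auto
      then obtain x1 where x1: "x1 \<in> points_on Pts' I' (psi g)" by blast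
      have "\<not> points_on Pts' I' (psi g) \<subseteq> {x1}"
      proof
        assume "points_on Pts' I' (psi g) \<subseteq> {x1}"
        then have "card (points_on Pts' I' (psi g)) \<le> card {x1}" by (intro card_mono) auto
        then show False using card_pts_line[OF y] m2 by simp
      qed
      then obtain x2 where x2: "x2 \<in> points_on Pts' I' (psi g)" "x2 \<noteq> x1" by blast
      have xx: "x1 \<in> Pts'" "I' x1 (psi g)" "x2 \<in> Pts'" "I' x2 (psi g)" using x1 x2 unfolding points_on_def by auto
      obtain A where A: "A \<in> Pts" "phi A = x1" "I A g" using meet_class[OF gh(1) xx(1,2)] by blast
      obtain B where B: "B \<in> Pts" "phi B = x2" "I B g" using meet_class[OF gh(1) xx(3,4)] by blast
      have "I A h" "I B h" using pe A B by blast+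
      show "g = h"
      proof (rule ccontr)
        assume "g \<noteq> h"
        then have "phi A = phi B" using nb[OF A(1) B(1) gh(1,2) _ A(3) B(3)] \<open>I A h\<close> \<open>I B h\<close> by blast
        then show False using A(2) B(2) x2(2) by simp
      qed
    qed
    show "lm ` Lns = alg1_lines Pts' Lns' I' G OA beta"
    proof
      show "lm ` Lns \<subseteq> alg1_lines Pts' Lns' I' G OA beta"
      proof
        fix z assume "z \<in> lm ` Lns"
        then obtain g where g: "g \<in> Lns" "z = lm g" by blast
        have "psi g \<in> Lns'" "g \<in> G (psi g)" using g psi_in unfolding G_def by auto
        then show "z \<in> alg1_lines Pts' Lns' I' G OA beta" unfolding alg1_lines_def g(2) lm_def by blast
      qed
      show "alg1_lines Pts' Lns' I' G OA beta \<subseteq> lm ` Lns"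
      proof
        fix z assume "z \<in> alg1_lines Pts' Lns' I' G OA beta"
        then obtain l r where lr: "l \<in> Lns'" "r \<in> G l"
          "z = (\<Union>P\<in>points_on Pts' I' l. {P} \<times> beta P l (OA l r P))" unfolding alg1_lines_def by blast
        have "r \<in> Lns" "psi r = l" using lr(2) unfolding G_def by auto
        then have "z = lm r" unfolding lm_def using lr(3) by simp
        then show "z \<in> lm ` Lns" using \<open>r \<in> Lns\<close> by blast
      qed
    qed
  qed
  show "\<forall>P\<in>Pts. \<forall>l\<in>Lns. I P l = (?f P \<in> lm l)"
  proof (intro ballI)
    fix P l assume P: "P \<in> Pts" and l: "l \<in> Lns"
    have "(?f P \<in> lm l) = (?f P \<in> ?f ` {Q \<in> Pts. I Q l})" using lm_eq[OF l] by simp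
    also have "\<dots> = (P \<in> {Q \<in> Pts. I Q l})" by auto
    finally show "I P l = (?f P \<in> lm l)" using P by simp
  qed
qed

theorem H2_main:
  "\<exists>m (PP::'p set) (PL::'l set) (PI::'p \<Rightarrow> 'l \<Rightarrow> bool) (AP::'p \<Rightarrow> 'p set) (AL::'p \<Rightarrow> 'p set set)
     (Sig::'l \<Rightarrow> nat set) (Rows::'l \<Rightarrow> 'l set) (OA::'l \<Rightarrow> 'l \<Rightarrow> 'p \<Rightarrow> nat)
     (pi::'p \<Rightarrow> 'l \<Rightarrow> 'p set set) (beta::'p \<Rightarrow> 'l \<Rightarrow> nat \<Rightarrow> 'p set).
           m \<ge> 2 \<and> alg1_data m PP PL PI AP AL Sig Rows OA pi beta \<and>
           isomorphic Pts Lns I (alg1_points PP AP) (alg1_lines PP PL PI Rows OA beta)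
             (\<lambda>x L. x \<in> L)"
  apply (rule exI[of _ m], rule exI[of _ Pts'], rule exI[of _ Lns'], rule exI[of _ I'],
    rule exI[of _ C], rule exI[of _ NL], rule exI[of _ "\<lambda>y. {..<m}"], rule exI[of _ G],
    rule exI[of _ OA], rule exI[of _ Pi], rule exI[of _ beta])
  using m2 alg1 iso by blast

end


locale iso_str =
  fixes P :: "'p set" and L :: "'l set" and I :: "'p \<Rightarrow> 'l \<Rightarrow> bool"
    and P2 :: "'q set" and L2 :: "'k set" and I2 :: "'q \<Rightarrow> 'k \<Rightarrow> bool"
    and e :: "'p \<Rightarrow> 'q" and c :: "'l \<Rightarrow> 'k"
  assumes be: "bij_betw e P P2" and bc: "bij_betw c L L2"
    and ic: "\<forall>p\<in>P. \<forall>l\<in>L. I p l \<longleftrightarrow> I2 (e p) (c l)"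
begin

lemma P2_eq: "P2 = e ` P" using be unfolding bij_betw_def by simp
lemma L2_eq: "L2 = c ` L" using bc unfolding bij_betw_def by simp
lemma einj: "inj_on e P" using be unfolding bij_betw_def by simp
lemma cinj: "inj_on c L" using bc unfolding bij_betw_def by simp
lemma e_in: "p \<in> P \<Longrightarrow> e p \<in> P2" using P2_eq by simp
lemma c_in: "l \<in> L \<Longrightarrow> c l \<in> L2" using L2_eq by simp
lemma Pcase: "u \<in> P2 \<Longrightarrow> \<exists>p\<in>P. u = e p" using P2_eq by blast
lemma Lcase: "v \<in> L2 \<Longrightarrow> \<exists>l\<in>L. v = c l" using L2_eq by blast
lemma einj': "p \<in> P \<Longrightarrow> q \<in> P \<Longrightarrow> e p = e q \<longleftrightarrow> p = q" by (rule inj_on_eq_iff[OF einj])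
lemma cinj': "l \<in> L \<Longrightarrow> h \<in> L \<Longrightarrow> c l = c h \<longleftrightarrow> l = h" by (rule inj_on_eq_iff[OF cinj])
lemma inc2: "p \<in> P \<Longrightarrow> l \<in> L \<Longrightarrow> I2 (e p) (c l) \<longleftrightarrow> I p l" using ic by blast

lemma join_tr: assumes "\<forall>p\<in>P. \<forall>q\<in>P. p \<noteq> q \<longrightarrow> (\<exists>!l. l \<in> L \<and> I p l \<and> I q l)"
  shows "\<forall>u\<in>P2. \<forall>v\<in>P2. u \<noteq> v \<longrightarrow> (\<exists>!l. l \<in> L2 \<and> I2 u l \<and> I2 v l)"
proof (intro ballI impI)
  fix u v assume uv: "u \<in> P2" "v \<in> P2" "u \<noteq> v"
  obtain p where p: "p \<in> P" "u = e p" using Pcase[OF uv(1)] by blast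
  obtain q where q: "q \<in> P" "v = e q" using Pcase[OF uv(2)] by blast
  note pq = p(1) q(1) p(2) q(2)
  then have "p \<noteq> q" using uv by auto
  then have e: "\<exists>!l. l \<in> L \<and> I p l \<and> I q l" using assms[rule_format, OF pq(1,2)] by blast
  obtain l0 where l0: "l0 \<in> L" "I p l0" "I q l0" and u0: "\<And>l. l \<in> L \<Longrightarrow> I p l \<Longrightarrow> I q l \<Longrightarrow> l = l0"
    using e by (elim ex1E) blast
  show "\<exists>!l. l \<in> L2 \<and> I2 u l \<and> I2 v l"
  proof (rule ex1I[of _ "c l0"])
    show "c l0 \<in> L2 \<and> I2 u (c l0) \<and> I2 v (c l0)" using l0 pq c_in inc2 by auto
  next
    fix l assume l: "l \<in> L2 \<and> I2 u l \<and> I2 v l"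
    then obtain l' where l': "l' \<in> L" "l = c l'" using Lcase by blast
    then have "I p l'" "I q l'" using l pq inc2 by auto
    then show "l = c l0" using u0 l' by simp
  qed
qed

lemma meet_tr: assumes "\<forall>g\<in>L. \<forall>h\<in>L. g \<noteq> h \<longrightarrow> (\<exists>!x. x \<in> P \<and> I x g \<and> I x h)"
  shows "\<forall>g\<in>L2. \<forall>h\<in>L2. g \<noteq> h \<longrightarrow> (\<exists>!u. u \<in> P2 \<and> I2 u g \<and> I2 u h)"
proof (intro ballI impI)
  fix u v assume uv: "u \<in> L2" "v \<in> L2" "u \<noteq> v"
  obtain p where p: "p \<in> L" "u = c p" using Lcase[OF uv(1)] by blast
  obtain q where q: "q \<in> L" "v = c q" using Lcase[OF uv(2)] by blast
  note pq = p(1) q(1) p(2) q(2)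
  then have "p \<noteq> q" using uv by auto
  then have e: "\<exists>!l. l \<in> P \<and> I l p \<and> I l q" using assms[rule_format, OF pq(1,2)] by blast
  obtain l0 where l0: "l0 \<in> P" "I l0 p" "I l0 q" and u0: "\<And>l. l \<in> P \<Longrightarrow> I l p \<Longrightarrow> I l q \<Longrightarrow> l = l0"
    using e by (elim ex1E) blast
  show "\<exists>!l. l \<in> P2 \<and> I2 l u \<and> I2 l v"
  proof (rule ex1I[of _ "e l0"])
    show "e l0 \<in> P2 \<and> I2 (e l0) u \<and> I2 (e l0) v" using l0 pq e_in inc2 by auto
  next
    fix l assume l: "l \<in> P2 \<and> I2 l u \<and> I2 l v"
    then obtain l' where l': "l' \<in> P" "l = e l'" using Pcase by blast
    then have "I l' p" "I l' q" using l pq inc2 by auto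
    then show "l = e l0" using u0 l' by simp
  qed
qed

lemma coll_tr: assumes "T0 \<subseteq> P" "\<not> collinear L I T0" shows "\<not> collinear L2 I2 (e ` T0)"
proof
  assume "collinear L2 I2 (e ` T0)"
  then obtain l2 where l2: "l2 \<in> L2" "\<forall>u\<in>e ` T0. I2 u l2" unfolding collinear_def by blast
  then obtain l where l: "l \<in> L" "l2 = c l" using Lcase by blast
  have "\<forall>p\<in>T0. I p l" using l2 l inc2 assms(1) by auto
  then show False using assms(2) l(1) unfolding collinear_def by blast
qed

lemma card_tr: "S \<subseteq> P \<Longrightarrow> card (e ` S) = card S"
  using card_image einj inj_on_subset by blast

lemma quad_tr: assumes "\<exists>S\<subseteq>P. card S = n \<and> (\<forall>T\<subseteq>S. card T = k \<longrightarrow> \<not> collinear L I T)"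
  shows "\<exists>S\<subseteq>P2. card S = n \<and> (\<forall>T\<subseteq>S. card T = k \<longrightarrow> \<not> collinear L2 I2 T)"
proof -
  obtain S where S: "S \<subseteq> P" "card S = n" "\<forall>T\<subseteq>S. card T = k \<longrightarrow> \<not> collinear L I T" using assms by blast
  have "e ` S \<subseteq> P2" using S P2_eq by blast
  moreover have "card (e ` S) = n" using card_tr S by simp
  moreover have "\<forall>T\<subseteq>e ` S. card T = k \<longrightarrow> \<not> collinear L2 I2 T"
  proof (intro allI impI)
    fix T assume T: "T \<subseteq> e ` S" "card T = k"
    then obtain T0 where T0: "T0 \<subseteq> S" "T = e ` T0" unfolding subset_image_iff by blast
    have "T0 \<subseteq> P" using T0 S by blast
    then have "card T0 = k" using T T0 card_tr by simp
    then have "\<not> collinear L I T0" using S T0 by blast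
    then show "\<not> collinear L2 I2 T" using coll_tr T0 S by blast
  qed
  ultimately show ?thesis by blast
qed

lemma pp_tr: assumes "projective_plane P L I" shows "projective_plane P2 L2 I2"
proof -
  note a = assms[unfolded projective_plane_def]
  show ?thesis unfolding projective_plane_def
    by (intro conjI join_tr[OF a[THEN conjunct1]] meet_tr[OF a[THEN conjunct2, THEN conjunct1]]
      quad_tr[OF a[THEN conjunct2, THEN conjunct2]])
qed

lemma aff_tr: assumes "affine_plane P L I" shows "affine_plane P2 L2 I2"
proof -
  note a = assms[unfolded affine_plane_def]
  note a1 = a[THEN conjunct1]
  note a2 = a[THEN conjunct2, THEN conjunct1]
  note a3 = a[THEN conjunct2, THEN conjunct2, THEN conjunct1]
  note a4 = a[THEN conjunct2, THEN conjunct2, THEN conjunct2]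
  have b2: "\<forall>l\<in>L2. \<forall>u\<in>P2. \<not> I2 u l \<longrightarrow> (\<exists>!h. h \<in> L2 \<and> I2 u h \<and> \<not> (\<exists>Q\<in>P2. I2 Q h \<and> I2 Q l))"
  proof (intro ballI impI)
    fix l2 u assume h: "l2 \<in> L2" "u \<in> P2" "\<not> I2 u l2"
    obtain l where l: "l \<in> L" "l2 = c l" using Lcase h by blast
    obtain p where p: "p \<in> P" "u = e p" using Pcase h by blast
    have np: "\<not> I p l" using h l p inc2 by auto
    obtain h0 where h0: "h0 \<in> L" "I p h0" "\<not> (\<exists>Q\<in>P. I Q h0 \<and> I Q l)"
      and u0: "\<And>h. h \<in> L \<Longrightarrow> I p h \<Longrightarrow> \<not> (\<exists>Q\<in>P. I Q h \<and> I Q l) \<Longrightarrow> h = h0"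
      using a2[rule_format, OF l(1) p(1) np] by (elim ex1E) blast
    have tr: "\<And>h. h \<in> L \<Longrightarrow> (\<exists>Q\<in>P2. I2 Q (c h) \<and> I2 Q l2) \<longleftrightarrow> (\<exists>Q\<in>P. I Q h \<and> I Q l)"
    proof -
      fix h assume hL: "h \<in> L"
      show "(\<exists>Q\<in>P2. I2 Q (c h) \<and> I2 Q l2) \<longleftrightarrow> (\<exists>Q\<in>P. I Q h \<and> I Q l)"
      proof
        assume "\<exists>Q\<in>P2. I2 Q (c h) \<and> I2 Q l2"
        then obtain Q where "Q \<in> P2" "I2 Q (c h)" "I2 Q l2" by blast
        then obtain q where "q \<in> P" "Q = e q" using Pcase by blast
        then show "\<exists>Q\<in>P. I Q h \<and> I Q l" using \<open>I2 Q (c h)\<close> \<open>I2 Q l2\<close> l hL inc2 by auto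
      next
        assume "\<exists>Q\<in>P. I Q h \<and> I Q l"
        then obtain q where "q \<in> P" "I q h" "I q l" by blast
        then show "\<exists>Q\<in>P2. I2 Q (c h) \<and> I2 Q l2" using e_in l hL inc2 by auto
      qed
    qed
    show "\<exists>!h. h \<in> L2 \<and> I2 u h \<and> \<not> (\<exists>Q\<in>P2. I2 Q h \<and> I2 Q l2)"
    proof (rule ex1I[of _ "c h0"])
      show "c h0 \<in> L2 \<and> I2 u (c h0) \<and> \<not> (\<exists>Q\<in>P2. I2 Q (c h0) \<and> I2 Q l2)"
        using h0 c_in p inc2 tr[OF h0(1)] by auto
    next
      fix hh assume hh: "hh \<in> L2 \<and> I2 u hh \<and> \<not> (\<exists>Q\<in>P2. I2 Q hh \<and> I2 Q l2)"
      then obtain h' where h': "h' \<in> L" "hh = c h'" using Lcase by blast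
      then have "I p h'" "\<not> (\<exists>Q\<in>P. I Q h' \<and> I Q l)" using hh p inc2 tr[OF h'(1)] by auto
      then show "hh = c h0" using u0 h' by simp
    qed
  qed
  have b3: "\<forall>l\<in>L2. \<exists>p\<in>P2. \<exists>q\<in>P2. p \<noteq> q \<and> I2 p l \<and> I2 q l"
  proof
    fix l2 assume "l2 \<in> L2"
    then obtain l where l: "l \<in> L" "l2 = c l" using Lcase by blast
    then obtain p q where "p \<in> P" "q \<in> P" "p \<noteq> q" "I p l" "I q l" using a3 by blast
    then have "e p \<in> P2" "e q \<in> P2" "e p \<noteq> e q" "I2 (e p) l2" "I2 (e q) l2"
      using e_in einj' inc2 l by auto
    then show "\<exists>p\<in>P2. \<exists>q\<in>P2. p \<noteq> q \<and> I2 p l2 \<and> I2 q l2" by blast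
  qed
  have b4: "\<exists>S\<subseteq>P2. card S = 3 \<and> \<not> collinear L2 I2 S"
  proof -
    obtain S where S: "S \<subseteq> P" "card S = 3" "\<not> collinear L I S" using a4 by blast
    have "e ` S \<subseteq> P2" "card (e ` S) = 3" "\<not> collinear L2 I2 (e ` S)"
      using S P2_eq card_tr coll_tr by auto
    then show ?thesis by blast
  qed
  show ?thesis unfolding affine_plane_def by (intro conjI join_tr[OF a1] b2 b3 b4)
qed

lemma pnb_tr: assumes "p \<in> P" "q \<in> P" shows "pnb P2 L2 I2 (e p) (e q) \<longleftrightarrow> pnb P L I p q"
proof
  assume "pnb P2 L2 I2 (e p) (e q)"
  then consider "e p = e q" | g h where "g \<in> L2" "h \<in> L2" "g \<noteq> h" "I2 (e p) g" "I2 (e q) g" "I2 (e p) h" "I2 (e q) h"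
    unfolding pnb_def by blast
  then show "pnb P L I p q"
  proof cases
    case 1 then show ?thesis using einj' assms unfolding pnb_def by blast
  next
    case 2
    obtain g' where g': "g' \<in> L" "g = c g'" using Lcase 2 by blast
    obtain h' where h': "h' \<in> L" "h = c h'" using Lcase 2 by blast
    have "g' \<noteq> h'" using 2 g' h' by auto
    moreover have "I p g'" "I q g'" "I p h'" "I q h'" using 2 g' h' inc2 assms by auto
    ultimately show ?thesis using g' h' unfolding pnb_def by blast
  qed
next
  assume "pnb P L I p q"
  then consider "p = q" | g h where "g \<in> L" "h \<in> L" "g \<noteq> h" "I p g" "I q g" "I p h" "I q h"
    unfolding pnb_def by blast
  then show "pnb P2 L2 I2 (e p) (e q)"
  proof cases
    case 1 then show ?thesis unfolding pnb_def by simp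
  next
    case 2
    then have "c g \<in> L2" "c h \<in> L2" "c g \<noteq> c h" "I2 (e p) (c g)" "I2 (e q) (c g)" "I2 (e p) (c h)" "I2 (e q) (c h)"
      using c_in cinj' inc2 assms by auto
    then show ?thesis unfolding pnb_def by blast
  qed
qed

lemma lnb_tr: assumes "g \<in> L" "h \<in> L" shows "lnb P2 L2 I2 (c g) (c h) \<longleftrightarrow> lnb P L I g h"
proof
  assume "lnb P2 L2 I2 (c g) (c h)"
  then consider "c g = c h" | p q where "p \<in> P2" "q \<in> P2" "p \<noteq> q" "I2 p (c g)" "I2 p (c h)" "I2 q (c g)" "I2 q (c h)"
    unfolding lnb_def by blast
  then show "lnb P L I g h"
  proof cases
    case 1 then show ?thesis using cinj' assms unfolding lnb_def by blast
  next
    case 2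
    obtain p' where p': "p' \<in> P" "p = e p'" using Pcase 2 by blast
    obtain q' where q': "q' \<in> P" "q = e q'" using Pcase 2 by blast
    have "p' \<noteq> q'" using 2 p' q' by auto
    moreover have "I p' g" "I p' h" "I q' g" "I q' h" using 2 p' q' inc2 assms by auto
    ultimately show ?thesis using p' q' unfolding lnb_def by blast
  qed
next
  assume "lnb P L I g h"
  then consider "g = h" | p q where "p \<in> P" "q \<in> P" "p \<noteq> q" "I p g" "I p h" "I q g" "I q h"
    unfolding lnb_def by blast
  then show "lnb P2 L2 I2 (c g) (c h)"
  proof cases
    case 1 then show ?thesis unfolding lnb_def by simp
  next
    case 2
    then have "e p \<in> P2" "e q \<in> P2" "e p \<noteq> e q" "I2 (e p) (c g)" "I2 (e p) (c h)" "I2 (e q) (c g)" "I2 (e q) (c h)"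
      using e_in einj' inc2 assms by auto
    then show ?thesis unfolding lnb_def by blast
  qed
qed

lemma nbp_tr: assumes "p \<in> P" shows "nbhd_points P2 L2 I2 (e p) = e ` nbhd_points P L I p"
proof
  show "nbhd_points P2 L2 I2 (e p) \<subseteq> e ` nbhd_points P L I p"
  proof
    fix u assume u: "u \<in> nbhd_points P2 L2 I2 (e p)"
    then have u1: "u \<in> P2" "pnb P2 L2 I2 u (e p)" unfolding nbhd_points_def by auto
    then obtain q where q: "q \<in> P" "u = e q" using Pcase by blast
    then have "pnb P L I q p" using u1 pnb_tr assms by simp
    then show "u \<in> e ` nbhd_points P L I p" using q unfolding nbhd_points_def by blast
  qed
  show "e ` nbhd_points P L I p \<subseteq> nbhd_points P2 L2 I2 (e p)"
    unfolding nbhd_points_def using pnb_tr assms e_in by auto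
qed

lemma rl_tr: assumes "p \<in> P" "g \<in> L" shows "restr_line P2 L2 I2 (e p) (c g) = e ` restr_line P L I p g"
proof -
  have "restr_line P2 L2 I2 (e p) (c g) = {Q \<in> e ` nbhd_points P L I p. I2 Q (c g)}"
    unfolding restr_line_def nbp_tr[OF assms(1)] ..
  also have "\<dots> = e ` {Q \<in> nbhd_points P L I p. I Q g}"
    using inc2 assms unfolding nbhd_points_def by auto
  finally show ?thesis unfolding restr_line_def .
qed

lemma nbl_tr: assumes "p \<in> P" shows "nbhd_lines P2 L2 I2 (e p) = (\<lambda>S. e ` S) ` nbhd_lines P L I p"
proof
  show "nbhd_lines P2 L2 I2 (e p) \<subseteq> (\<lambda>S. e ` S) ` nbhd_lines P L I p"
  proof
    fix X assume "X \<in> nbhd_lines P2 L2 I2 (e p)"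
    then obtain g2 where g2: "g2 \<in> L2" "X = restr_line P2 L2 I2 (e p) g2" "X \<noteq> {}"
      unfolding nbhd_lines_def by blast
    then obtain g where g: "g \<in> L" "g2 = c g" using Lcase by blast
    then have "X = e ` restr_line P L I p g" using g2 rl_tr assms by simp
    then show "X \<in> (\<lambda>S. e ` S) ` nbhd_lines P L I p" using g g2(3) unfolding nbhd_lines_def by blast
  qed
  show "(\<lambda>S. e ` S) ` nbhd_lines P L I p \<subseteq> nbhd_lines P2 L2 I2 (e p)"
  proof
    fix X assume "X \<in> (\<lambda>S. e ` S) ` nbhd_lines P L I p"
    then obtain g where g: "g \<in> L" "X = e ` restr_line P L I p g" "restr_line P L I p g \<noteq> {}"
      unfolding nbhd_lines_def by blast
    then have "X = restr_line P2 L2 I2 (e p) (c g)" "X \<noteq> {}" using rl_tr assms by auto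
    then show "X \<in> nbhd_lines P2 L2 I2 (e p)" using c_in g(1) unfolding nbhd_lines_def by blast
  qed
qed

lemma nb_sub: "nbhd_points P L I p \<subseteq> P" unfolding nbhd_points_def by auto
lemma nbl_sub: "X \<in> nbhd_lines P L I p \<Longrightarrow> X \<subseteq> nbhd_points P L I p"
  unfolding nbhd_lines_def restr_line_def by auto

lemma aff_nb_tr: assumes "p \<in> P"
  and "affine_plane (nbhd_points P L I p) (nbhd_lines P L I p) (\<lambda>x L. x \<in> L)"
  shows "affine_plane (nbhd_points P2 L2 I2 (e p)) (nbhd_lines P2 L2 I2 (e p)) (\<lambda>x L. x \<in> L)"
proof -
  let ?N = "nbhd_points P L I p" and ?NL = "nbhd_lines P L I p"
  have ie: "inj_on e ?N" using einj nb_sub inj_on_subset by blast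
  interpret J: iso_str ?N ?NL "\<lambda>x L. x \<in> L" "e ` ?N" "(\<lambda>S. e ` S) ` ?NL" "\<lambda>x L. x \<in> L" e "\<lambda>S. e ` S"
  proof
    show "bij_betw e ?N (e ` ?N)" using ie by (simp add: bij_betw_def)
    have "inj_on (\<lambda>S. e ` S) ?NL"
    proof (rule inj_onI)
      fix X Y assume "X \<in> ?NL" "Y \<in> ?NL" "e ` X = e ` Y"
      then show "X = Y" using inj_on_image_eq_iff[OF ie nbl_sub nbl_sub] \<open>X \<in> ?NL\<close> \<open>Y \<in> ?NL\<close> by blast
    qed
    then show "bij_betw (\<lambda>S. e ` S) ?NL ((\<lambda>S. e ` S) ` ?NL)" by (simp add: bij_betw_def)
    show "\<forall>x\<in>?N. \<forall>X\<in>?NL. (x \<in> X) = (e x \<in> e ` X)"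
    proof (intro ballI)
      fix x X assume "x \<in> ?N" "X \<in> ?NL"
      then show "(x \<in> X) = (e x \<in> e ` X)" using inj_on_image_mem_iff[OF ie \<open>x \<in> ?N\<close> nbl_sub[OF \<open>X \<in> ?NL\<close>]] by simp
    qed
  qed
  have "affine_plane (e ` ?N) ((\<lambda>S. e ` S) ` ?NL) (\<lambda>x L. x \<in> L)" using J.aff_tr[OF assms(2)] .
  then show ?thesis unfolding nbp_tr[OF assms(1)] nbl_tr[OF assms(1)] .
qed

end

lemma iso_trans:
  assumes "isomorphic A B I A' B' I'" "isomorphic A' B' I' A'' B'' I''"
  shows "isomorphic A B I A'' B'' I''"
proof -
  obtain f g where fg: "bij_betw f A A'" "bij_betw g B B'" "\<forall>P\<in>A. \<forall>l\<in>B. I P l = I' (f P) (g l)"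
    using assms(1) unfolding isomorphic_def by blast
  obtain f' g' where fg': "bij_betw f' A' A''" "bij_betw g' B' B''" "\<forall>P\<in>A'. \<forall>l\<in>B'. I' P l = I'' (f' P) (g' l)"
    using assms(2) unfolding isomorphic_def by blast
  have b: "bij_betw (f' \<circ> f) A A''" "bij_betw (g' \<circ> g) B B''" using fg fg' bij_betw_trans by blast+
  have "\<forall>P\<in>A. \<forall>l\<in>B. I P l = I'' ((f' \<circ> f) P) ((g' \<circ> g) l)"
  proof (intro ballI)
    fix P l assume P: "P \<in> A" and l: "l \<in> B"
    have "f P \<in> A'" "g l \<in> B'" using fg P l unfolding bij_betw_def by auto
    then show "I P l = I'' ((f' \<circ> f) P) ((g' \<circ> g) l)" using fg(3) fg'(3) P l by simp
  qed
  then show ?thesis unfolding isomorphic_def using b by blast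
qed

lemma uniform2_H2:
  fixes Pts :: "'p set" and Lns :: "'l set" and I :: "'p \<Rightarrow> 'l \<Rightarrow> bool"
  assumes fin: "finite Pts" "finite Lns" and u: "uniform2_proj_hjelmslev Pts Lns I"
  shows "\<exists>Pts' Lns' I' phi psi. H2 Pts Lns I Pts' Lns' I' phi psi"
proof -
  have ph: "proj_hjelmslev_plane Pts Lns I" using u unfolding uniform2_proj_hjelmslev_def by blast
  note phx = ph[unfolded proj_hjelmslev_plane_def]
  obtain Pts' :: "'p set" and Lns' :: "'l set" and I' :: "'p \<Rightarrow> 'l \<Rightarrow> bool"
    and phi :: "'p \<Rightarrow> 'p" and psi :: "'l \<Rightarrow> 'l" where X: "projective_plane Pts' Lns' I'"
    "phi ` Pts = Pts'" "psi ` Lns = Lns'" "\<forall>P\<in>Pts. \<forall>g\<in>Lns. I P g \<longrightarrow> I' (phi P) (psi g)"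
    "\<forall>P\<in>Pts. \<forall>Q\<in>Pts. phi P = phi Q \<longleftrightarrow> pnb Pts Lns I P Q"
    "\<forall>g\<in>Lns. \<forall>h\<in>Lns. psi g = psi h \<longleftrightarrow> lnb Pts Lns I g h"
    using phx[THEN conjunct2, THEN conjunct2] by blast
  have aff: "\<forall>P\<in>Pts. affine_plane (nbhd_points Pts Lns I P) (nbhd_lines Pts Lns I P) (\<lambda>x L. x \<in> L)"
    using u unfolding uniform2_proj_hjelmslev_def uniform1_affine_hjelmslev_def by blast
  have "H2 Pts Lns I Pts' Lns' I' phi psi"
    by (unfold_locales) (use fin phx[THEN conjunct1] phx[THEN conjunct2, THEN conjunct1] X aff in auto)
  then show ?thesis by blast
qed

lemma H2_nat:
  fixes Pts :: "'p set" and Lns :: "'l set" and I :: "'p \<Rightarrow> 'l \<Rightarrow> bool"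
  assumes h: "H2 Pts Lns I Pts' Lns' I' phi psi"
  shows "\<exists>(Pts2::nat set) (Lns2::nat set) I2 (Pts2'::nat set) (Lns2'::nat set) I2' phi2 psi2.
    H2 Pts2 Lns2 I2 Pts2' Lns2' I2' phi2 psi2 \<and> isomorphic Pts Lns I Pts2 Lns2 I2"
proof -
  interpret H: H2 Pts Lns I Pts' Lns' I' phi psi by (rule h)
  have fU: "finite (Pts \<union> Pts')" using H.finP H.finPts' by simp
  obtain e :: "'p \<Rightarrow> nat" where e: "inj_on e (Pts \<union> Pts')" using finite_imp_inj_to_nat_seg[OF fU] by blast
  have fV: "finite (Lns \<union> Lns')" using H.finLn H.psiim by auto
  obtain c :: "'l \<Rightarrow> nat" where c: "inj_on c (Lns \<union> Lns')" using finite_imp_inj_to_nat_seg[OF fV] by blast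
  define de where "de = inv_into (Pts \<union> Pts') e"
  define dc where "dc = inv_into (Lns \<union> Lns') c"
  have de: "\<And>p. p \<in> Pts \<union> Pts' \<Longrightarrow> de (e p) = p" unfolding de_def using inv_into_f_f[OF e] by blast
  have dc: "\<And>l. l \<in> Lns \<union> Lns' \<Longrightarrow> dc (c l) = l" unfolding dc_def using inv_into_f_f[OF c] by blast
  define I2 where "I2 u v = I (de u) (dc v)" for u v
  define I2' where "I2' u v = I' (de u) (dc v)" for u v
  define phi2 where "phi2 u = e (phi (de u))" for u
  define psi2 where "psi2 v = c (psi (dc v))" for v
  have eP: "inj_on e Pts" "inj_on e Pts'" using e inj_on_subset by blast+
  have cL: "inj_on c Lns" "inj_on c Lns'" using c inj_on_subset by blast+
  interpret S: iso_str Pts Lns I "e ` Pts" "c ` Lns" I2 e c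
  proof
    show "bij_betw e Pts (e ` Pts)" using eP by (simp add: bij_betw_def)
    show "bij_betw c Lns (c ` Lns)" using cL by (simp add: bij_betw_def)
    show "\<forall>p\<in>Pts. \<forall>l\<in>Lns. I p l = I2 (e p) (c l)" unfolding I2_def using de dc by simp
  qed
  interpret T: iso_str Pts' Lns' I' "e ` Pts'" "c ` Lns'" I2' e c
  proof
    show "bij_betw e Pts' (e ` Pts')" using eP by (simp add: bij_betw_def)
    show "bij_betw c Lns' (c ` Lns')" using cL by (simp add: bij_betw_def)
    show "\<forall>p\<in>Pts'. \<forall>l\<in>Lns'. I' p l = I2' (e p) (c l)" unfolding I2'_def using de dc by simp
  qed
  have phi2e: "\<And>p. p \<in> Pts \<Longrightarrow> phi2 (e p) = e (phi p)" unfolding phi2_def using de by simp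
  have psi2c: "\<And>g. g \<in> Lns \<Longrightarrow> psi2 (c g) = c (psi g)" unfolding psi2_def using dc by simp
  have "H2 (e ` Pts) (c ` Lns) I2 (e ` Pts') (c ` Lns') I2' phi2 psi2"
  proof
    show "finite (e ` Pts)" using H.finP by simp
    show "finite (c ` Lns)" using H.finLn by simp
    show "\<forall>P\<in>e ` Pts. \<forall>Q\<in>e ` Pts. \<exists>g\<in>c ` Lns. I2 P g \<and> I2 Q g"
    proof (intro ballI)
      fix u v assume "u \<in> e ` Pts" "v \<in> e ` Pts"
      then obtain p q where pq: "p \<in> Pts" "q \<in> Pts" "u = e p" "v = e q" by blast
      then obtain g where "g \<in> Lns" "I p g" "I q g" using H.hax1 by blast
      then show "\<exists>g\<in>c ` Lns. I2 u g \<and> I2 v g" using pq S.inc2 by blast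
    qed
    show "\<forall>g\<in>c ` Lns. \<forall>h\<in>c ` Lns. \<exists>P\<in>e ` Pts. I2 P g \<and> I2 P h"
    proof (intro ballI)
      fix u v assume "u \<in> c ` Lns" "v \<in> c ` Lns"
      then obtain p q where pq: "p \<in> Lns" "q \<in> Lns" "u = c p" "v = c q" by blast
      then obtain g where "g \<in> Pts" "I g p" "I g q" using H.hax2 by blast
      then show "\<exists>g\<in>e ` Pts. I2 g u \<and> I2 g v" using pq S.inc2 by blast
    qed
    show "projective_plane (e ` Pts') (c ` Lns') I2'" using T.pp_tr[OF H.pp] .
    show "phi2 ` e ` Pts = e ` Pts'"
    proof -
      have "phi2 ` e ` Pts = e ` phi ` Pts" using phi2e by (force simp: image_comp)
      then show ?thesis using H.phiim by simp
    qed
    show "psi2 ` c ` Lns = c ` Lns'"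
    proof -
      have "psi2 ` c ` Lns = c ` psi ` Lns" using psi2c by (force simp: image_comp)
      then show ?thesis using H.psiim by simp
    qed
    show "\<forall>P\<in>e ` Pts. \<forall>g\<in>c ` Lns. I2 P g \<longrightarrow> I2' (phi2 P) (psi2 g)"
    proof (intro ballI impI)
      fix u v assume uv: "u \<in> e ` Pts" "v \<in> c ` Lns" "I2 u v"
      then obtain p g where pg: "p \<in> Pts" "g \<in> Lns" "u = e p" "v = c g" by blast
      then have "I p g" using uv S.inc2 by blast
      then have "I' (phi p) (psi g)" using H.inc pg by blast
      then show "I2' (phi2 u) (psi2 v)" using T.inc2 pg phi2e psi2c H.phi_in H.psi_in by simp
    qed
    show "\<forall>P\<in>e ` Pts. \<forall>Q\<in>e ` Pts. (phi2 P = phi2 Q) = pnb (e ` Pts) (c ` Lns) I2 P Q"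
    proof (intro ballI)
      fix u v assume "u \<in> e ` Pts" "v \<in> e ` Pts"
      then obtain p q where pq: "p \<in> Pts" "q \<in> Pts" "u = e p" "v = e q" by blast
      have "(phi2 u = phi2 v) = (phi p = phi q)" using pq phi2e T.einj' H.phi_in by simp
      also have "\<dots> = pnb Pts Lns I p q" using H.phiN pq by blast
      also have "\<dots> = pnb (e ` Pts) (c ` Lns) I2 u v" using S.pnb_tr pq by simp
      finally show "(phi2 u = phi2 v) = pnb (e ` Pts) (c ` Lns) I2 u v" .
    qed
    show "\<forall>g\<in>c ` Lns. \<forall>h\<in>c ` Lns. (psi2 g = psi2 h) = lnb (e ` Pts) (c ` Lns) I2 g h"
    proof (intro ballI)
      fix u v assume "u \<in> c ` Lns" "v \<in> c ` Lns"
      then obtain p q where pq: "p \<in> Lns" "q \<in> Lns" "u = c p" "v = c q" by blast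
      have "(psi2 u = psi2 v) = (psi p = psi q)" using pq psi2c T.cinj' H.psi_in by simp
      also have "\<dots> = lnb Pts Lns I p q" using H.psiN pq by blast
      also have "\<dots> = lnb (e ` Pts) (c ` Lns) I2 u v" using S.lnb_tr pq by simp
      finally show "(psi2 u = psi2 v) = lnb (e ` Pts) (c ` Lns) I2 u v" .
    qed
    show "\<forall>P\<in>e ` Pts. affine_plane (nbhd_points (e ` Pts) (c ` Lns) I2 P) (nbhd_lines (e ` Pts) (c ` Lns) I2 P) (\<lambda>x L. x \<in> L)"
    proof
      fix u assume "u \<in> e ` Pts"
      then obtain p where p: "p \<in> Pts" "u = e p" by blast
      show "affine_plane (nbhd_points (e ` Pts) (c ` Lns) I2 u) (nbhd_lines (e ` Pts) (c ` Lns) I2 u) (\<lambda>x L. x \<in> L)"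
        using S.aff_nb_tr[OF p(1)] H.aff p by simp
    qed
  qed
  moreover have "isomorphic Pts Lns I (e ` Pts) (c ` Lns) I2"
    unfolding isomorphic_def using S.be S.bc S.ic by blast
  ultimately show ?thesis by blast
qed

theorem mainTheorem2:
  fixes Pts :: "'p set" and Lns :: "'l set" and I :: "'p \<Rightarrow> 'l \<Rightarrow> bool"
  assumes "finite Pts" and "finite Lns"
    and "uniform2_proj_hjelmslev Pts Lns I"
  shows "\<exists>(m::nat) (PP::nat set) (PL::nat set) (PI::nat \<Rightarrow> nat \<Rightarrow> bool)
           (AP::nat \<Rightarrow> nat set) (AL::nat \<Rightarrow> nat set set)
           (Sig::nat \<Rightarrow> nat set) (Rows::nat \<Rightarrow> nat set) (OA::nat \<Rightarrow> nat \<Rightarrow> nat \<Rightarrow> nat)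
           (pi::nat \<Rightarrow> nat \<Rightarrow> nat set set) (beta::nat \<Rightarrow> nat \<Rightarrow> nat \<Rightarrow> nat set).
           m \<ge> 2 \<and> alg1_data m PP PL PI AP AL Sig Rows OA pi beta \<and>
           isomorphic Pts Lns I (alg1_points PP AP) (alg1_lines PP PL PI Rows OA beta)
             (\<lambda>x L. x \<in> L)"
proof -
  obtain Pts' Lns' I' phi psi where h: "H2 Pts Lns I Pts' Lns' I' phi psi"
    using uniform2_H2[OF assms] by blast
  obtain Pts2 Lns2 I2 Pts2' Lns2' I2' phi2 psi2 where
    h2: "H2 (Pts2::nat set) (Lns2::nat set) I2 (Pts2'::nat set) (Lns2'::nat set) I2' phi2 psi2"
    and i1: "isomorphic Pts Lns I Pts2 Lns2 I2"
    using H2_nat[OF h] by blast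
  obtain m :: nat and PP :: "nat set" and PL :: "nat set" and PI :: "nat \<Rightarrow> nat \<Rightarrow> bool"
    and AP :: "nat \<Rightarrow> nat set" and AL :: "nat \<Rightarrow> nat set set" and Sig :: "nat \<Rightarrow> nat set"
    and Rows :: "nat \<Rightarrow> nat set" and OA :: "nat \<Rightarrow> nat \<Rightarrow> nat \<Rightarrow> nat"
    and pi :: "nat \<Rightarrow> nat \<Rightarrow> nat set set" and beta :: "nat \<Rightarrow> nat \<Rightarrow> nat \<Rightarrow> nat set" where
    r: "m \<ge> 2" "alg1_data m PP PL PI AP AL Sig Rows OA pi beta"
    "isomorphic Pts2 Lns2 I2 (alg1_points PP AP) (alg1_lines PP PL PI Rows OA beta) (\<lambda>x L. x \<in> L)"
    using H2.H2_main[OF h2] by blast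
  have "isomorphic Pts Lns I (alg1_points PP AP) (alg1_lines PP PL PI Rows OA beta) (\<lambda>x L. x \<in> L)"
    using iso_trans[OF i1 r(3)] .
  then show ?thesis using r(1,2) by blast
qed

end
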